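(* If the Markov random cocycle $(\underline{A},P,q)$ has both singular (rank one) and invertible components and $P$ is primitive, then the Markov operator $\mathcal{Q}$ admits a unique stationary probability measure on $\mathscr{A}\times\mathbb{P}^1$ (namely the measure $\eta$ of Proposition 2.1).
   Context: $\mathscr{A}=\{1,\dots,k\}=\mathscr{A}_{\mathrm{sing}}\sqcup\mathscr{A}_{\mathrm{inv}}$ both nonempty, $\mathrm{rank}A_i=1$ for $i\in\mathscr{A}_{\mathrm{sing}}$, $A_i$ invertible for $i\in\mathscr{A}_{\mathrm{inv}}$. $P=(p_{ij})$ primitive left stochastic ($p_{ij}$ = probability of $j\to i$), $Pq=q$. Projective action of a rank one matrix is the constant map to its range. $(\mathcal{Q}\varphi)(j,\hat v)=\sum_i\varphi(i,\hat A_i\hat v)p_{ij}$ on bounded measurable $\varphi$; stationary means $\int\mathcal{Q}\varphi\,d\eta=\int\varphi\,d\eta$ for all such $\varphi$. The measure of Proposition 2.1 is $\eta=\sum_jq_j\delta_j\times\eta_j$, $\eta_j=\frac1{q_j}\sum_{s\in\mathscr{A}_{\mathrm{sing}}}q_s\sum_{n\ge1}\sum_{\underline\omega\in\mathscr{B}_n(s,j)}p(\underline\omega)\delta_{\hat A^n(\underline\omega)\hat r_s}$, where $\mathscr{B}_n(s,j)$ are words $(\omega_0,\dots,\omega_n)$ with $\omega_0=s,\omega_n=j$ and interior letters in $\mathscr{A}_{\mathrm{inv}}$, $A^n(\underline\omega)=A_{\omega_n}\cdots A_{\omega_1}$, $p(\underline\omega)=\prod_{l=1}^np_{\omega_l\omega_{l-1}}$,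 $r_s$ the range of $A_s$. *)

theory Defs
  imports "HOL-Analysis.Analysis" "HOL-Probability.Probability"
begin

section \<open>Projective line P^1, modelled by angles in [0, pi)\<close>

definition dir :: "real \<Rightarrow> real^2" where
  "dir \<theta> = vector [cos \<theta>, sin \<theta>]"

definition proj :: "real^2 \<Rightarrow> real" where
  "proj v = (THE \<theta>. 0 \<le> \<theta> \<and> \<theta> < pi \<and> (\<exists>c. c \<noteq> 0 \<and> v = c *\<^sub>R dir \<theta>))"

definition range_pt :: "real^2^2 \<Rightarrow> real" where
  "range_pt A = proj (SOME v. v \<noteq> 0 \<and> v \<in> range (\<lambda>x. A *v x))"

definition pact :: "real^2^2 \<Rightarrow> real \<Rightarrow> real" where
  "pact A \<theta> = (if rank A = 1 then range_pt A else proj (A *v dir \<theta>))"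

fun mpow :: "nat \<Rightarrow> (nat \<Rightarrow> nat \<Rightarrow> real) \<Rightarrow> nat \<Rightarrow> nat \<Rightarrow> nat \<Rightarrow> real" where
  "mpow k P 0 = (\<lambda>i j. if i = j then 1 else 0)"
| "mpow k P (Suc m) = (\<lambda>i j. \<Sum>l\<in>{1..k}. P i l * mpow k P m l j)"

text \<open>Left stochastic: nonnegative entries, columns sum to 1 (p_ij = prob. of j -> i).\<close>
definition left_stochastic :: "nat \<Rightarrow> (nat \<Rightarrow> nat \<Rightarrow> real) \<Rightarrow> bool" where
  "left_stochastic k P \<longleftrightarrow>
     (\<forall>i\<in>{1..k}. \<forall>j\<in>{1..k}. 0 \<le> P i j) \<and> (\<forall>j\<in>{1..k}. (\<Sum>i\<in>{1..k}. P i j) = 1)"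

definition primitive :: "nat \<Rightarrow> (nat \<Rightarrow> nat \<Rightarrow> real) \<Rightarrow> bool" where
  "primitive k P \<longleftrightarrow> (\<exists>m. \<forall>i\<in>{1..k}. \<forall>j\<in>{1..k}. mpow k P m i j > 0)"

definition state_space :: "nat \<Rightarrow> (nat \<times> real) measure" where
  "state_space k = count_space {1..k} \<Otimes>\<^sub>M restrict_space borel {0..<pi}"

definition Qop :: "nat \<Rightarrow> (nat \<Rightarrow> real^2^2) \<Rightarrow> (nat \<Rightarrow> nat \<Rightarrow> real)
                  \<Rightarrow> (nat \<times> real \<Rightarrow> real) \<Rightarrow> nat \<times> real \<Rightarrow> real" where
  "Qop k A P \<phi> = (\<lambda>(j, \<theta>). \<Sum>i\<in>{1..k}. \<phi> (i, pact (A i) \<theta>) * P i j)"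

definition stationary :: "nat \<Rightarrow> (nat \<Rightarrow> real^2^2) \<Rightarrow> (nat \<Rightarrow> nat \<Rightarrow> real)
                  \<Rightarrow> (nat \<times> real) measure \<Rightarrow> bool" where
  "stationary k A P \<mu> \<longleftrightarrow>
     (\<forall>\<phi> \<in> borel_measurable (state_space k).
        (\<exists>B. \<forall>x\<in>space (state_space k). \<bar>\<phi> x\<bar> \<le> B) \<longrightarrow>
        (\<integral>x. Qop k A P \<phi> x \<partial>\<mu>) = (\<integral>x. \<phi> x \<partial>\<mu>))"

definition stationary_prob :: "nat \<Rightarrow> (nat \<Rightarrow> real^2^2) \<Rightarrow> (nat \<Rightarrow> nat \<Rightarrow> real)
                  \<Rightarrow> (nat \<times> real) measure \<Rightarrow> bool" where
  "stationary_prob k A P \<mu> \<longleftrightarrow>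
     sets \<mu> = sets (state_space k) \<and> prob_space \<mu> \<and> stationary k A P \<mu>"

text \<open>Words (omega_0,...,omega_n), n >= 1, omega_0 singular, omega_n in A,
  interior letters invertible; stored as lists of length n+1.\<close>
definition words :: "nat \<Rightarrow> nat set \<Rightarrow> nat set \<Rightarrow> nat list set" where
  "words k Sing Inv = {w. 2 \<le> length w \<and> hd w \<in> Sing \<and> last w \<in> {1..k} \<and>
                          (\<forall>l. 0 < l \<and> l < length w - 1 \<longrightarrow> w ! l \<in> Inv)}"

definition wprob :: "(nat \<Rightarrow> nat \<Rightarrow> real) \<Rightarrow> nat list \<Rightarrow> real" where
  "wprob P w = (\<Prod>l\<in>{1..<length w}. P (w ! l) (w ! (l - 1)))"

definition wpoint :: "(nat \<Rightarrow> real^2^2) \<Rightarrow> nat list \<Rightarrow> real" where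
  "wpoint A w = foldl (\<lambda>\<theta> i. pact (A i) \<theta>) (range_pt (A (hd w))) (tl w)"

text \<open>eta = sum_j q_j delta_j x eta_j
      = sum over words omega of q_{omega_0} p(omega) delta_(omega_n, hat A^n(omega) hat r_{omega_0}).\<close>
definition eta :: "nat \<Rightarrow> nat set \<Rightarrow> nat set \<Rightarrow> (nat \<Rightarrow> real^2^2) \<Rightarrow> (nat \<Rightarrow> nat \<Rightarrow> real)
                  \<Rightarrow> (nat \<Rightarrow> real) \<Rightarrow> (nat \<times> real) measure" where
  "eta k Sing Inv A P q =
     distr (density (count_space (words k Sing Inv)) (\<lambda>w. ennreal (q (hd w) * wprob P w)))
           (state_space k) (\<lambda>w. (last w, wpoint A w))"

end

theory Submission
  imports Defs
begin


lemma sum_pos_ex: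
  fixes f :: "'i \<Rightarrow> real"
  assumes "finite A" "\<forall>x\<in>A. 0 \<le> f x" "i \<in> A" "0 < f i"
  shows "0 < sum f A"
  using sum_strict_mono_ex1[of A "\<lambda>_. 0" f] assms by auto

locale MC =
  fixes k :: nat and Sing Inv :: "nat set"
    and A :: "nat \<Rightarrow> real^2^2" and P :: "nat \<Rightarrow> nat \<Rightarrow> real" and q :: "nat \<Rightarrow> real"
  assumes part: "Sing \<union> Inv = {1..k}" "Sing \<inter> Inv = {}"
    and nonempty: "Sing \<noteq> {}" "Inv \<noteq> {}"
    and sing: "\<forall>i\<in>Sing. rank (A i) = 1"
    and inv: "\<forall>i\<in>Inv. invertible (A i)"
    and stoch: "left_stochastic k P"
    and prim: "primitive k P"
    and q_prob: "\<forall>i\<in>{1..k}. 0 \<le> q i" "(\<Sum>i\<in>{1..k}. q i) = 1"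
    and q_stat: "\<forall>i\<in>{1..k}. (\<Sum>j\<in>{1..k}. P i j * q j) = q i"
begin

lemma Sing_sub: "Sing \<subseteq> {1..k}" and Inv_sub: "Inv \<subseteq> {1..k}"
  using part by auto

lemma finite_Sing[simp]: "finite Sing" and finite_Inv[simp]: "finite Inv"
  using Sing_sub Inv_sub finite_subset by blast+

lemma P_nonneg: "i \<in> {1..k} \<Longrightarrow> j \<in> {1..k} \<Longrightarrow> 0 \<le> P i j"
  using stoch unfolding left_stochastic_def by auto

lemma P_colsum: "j \<in> {1..k} \<Longrightarrow> (\<Sum>i\<in>{1..k}. P i j) = 1"
  using stoch unfolding left_stochastic_def by auto

lemma sum_K_split: "(\<Sum>i\<in>{1..k}. f i) = (\<Sum>i\<in>Sing. f i) + (\<Sum>i\<in>Inv. f i)"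
proof -
  have "(\<Sum>i\<in>{1..k}. f i) = (\<Sum>i\<in>Sing \<union> Inv. f i)" using part by simp
  also have "\<dots> = (\<Sum>i\<in>Sing. f i) + (\<Sum>i\<in>Inv. f i)"
    by (rule sum.union_disjoint) (use part in auto)
  finally show ?thesis .
qed

definition Rv :: "(nat \<Rightarrow> real) \<Rightarrow> nat \<Rightarrow> real" where
  "Rv f j = (\<Sum>i\<in>Inv. P i j * f i)"

definition Pt :: "(nat \<Rightarrow> real) \<Rightarrow> nat \<Rightarrow> real" where
  "Pt f j = (\<Sum>i\<in>{1..k}. P i j * f i)"

definition u :: "nat \<Rightarrow> nat \<Rightarrow> real" where
  "u n = (Rv ^^ n) (\<lambda>_. 1)"

lemma Rv_mono: "(\<And>i. i \<in> {1..k} \<Longrightarrow> f i \<le> g i) \<Longrightarrow> j \<in> {1..k} \<Longrightarrow> Rv f j \<le> Rv g j"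
  unfolding Rv_def using Inv_sub P_nonneg
  by (intro sum_mono mult_left_mono) auto

lemma Rvn_mono: "(\<And>i. i \<in> {1..k} \<Longrightarrow> f i \<le> g i) \<Longrightarrow> j \<in> {1..k} \<Longrightarrow> (Rv^^n) f j \<le> (Rv^^n) g j"
proof (induction n arbitrary: j)
  case 0 then show ?case by simp
next
  case (Suc n) show ?case unfolding funpow.simps comp_def by (rule Rv_mono) (use Suc in auto)
qed

lemma Rv_nonneg: "(\<And>i. i \<in> {1..k} \<Longrightarrow> 0 \<le> f i) \<Longrightarrow> j \<in> {1..k} \<Longrightarrow> 0 \<le> Rv f j"
  unfolding Rv_def using Inv_sub P_nonneg
  by (intro sum_nonneg mult_nonneg_nonneg) auto

lemma Rvn_nonneg: "(\<And>i. i \<in> {1..k} \<Longrightarrow> 0 \<le> f i) \<Longrightarrow> j \<in> {1..k} \<Longrightarrow> 0 \<le> (Rv^^n) f j"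
proof (induction n arbitrary: j)
  case 0 then show ?case by simp
next
  case (Suc n) show ?case unfolding funpow.simps comp_def by (rule Rv_nonneg) (use Suc in auto)
qed

lemma Rvn_scale: "(Rv^^n) (\<lambda>i. c * f i) = (\<lambda>j. c * (Rv^^n) f j)"
proof (induction n)
  case 0 then show ?case by simp
next
  case (Suc n) then show ?case
    by (simp add: Rv_def sum_distrib_left algebra_simps)
qed

lemma Rvn_diff: "(Rv^^n) (\<lambda>i. f i - g i) = (\<lambda>j. (Rv^^n) f j - (Rv^^n) g j)"
proof (induction n)
  case 0 then show ?case by simp
next
  case (Suc n) then show ?case
    by (simp add: Rv_def sum_subtractf algebra_simps)
qed

lemma Rv_le_Pt: "(\<And>i. i \<in> {1..k} \<Longrightarrow> 0 \<le> f i) \<Longrightarrow> j \<in> {1..k} \<Longrightarrow> Rv f j \<le> Pt f j"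
  unfolding Rv_def Pt_def using Inv_sub P_nonneg
  by (intro sum_mono2) auto

lemma Pt_mono: "(\<And>i. i \<in> {1..k} \<Longrightarrow> f i \<le> g i) \<Longrightarrow> j \<in> {1..k} \<Longrightarrow> Pt f j \<le> Pt g j"
  unfolding Pt_def using P_nonneg
  by (intro sum_mono mult_left_mono) auto

lemma Ptn_mono: "(\<And>i. i \<in> {1..k} \<Longrightarrow> f i \<le> g i) \<Longrightarrow> j \<in> {1..k} \<Longrightarrow> (Pt^^n) f j \<le> (Pt^^n) g j"
proof (induction n arbitrary: j)
  case 0 then show ?case by simp
next
  case (Suc n) show ?case unfolding funpow.simps comp_def by (rule Pt_mono) (use Suc in auto)
qed

lemma Rvn_le_Ptn: "(\<And>i. i \<in> {1..k} \<Longrightarrow> 0 \<le> f i) \<Longrightarrow> j \<in> {1..k} \<Longrightarrow> (Rv^^n) f j \<le> (Pt^^n) f j"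
proof (induction n arbitrary: j)
  case 0 then show ?case by simp
next
  case (Suc n)
  have "(Rv^^Suc n) f j = Rv ((Rv^^n) f) j" by simp
  also have "\<dots> \<le> Pt ((Rv^^n) f) j"
    by (rule Rv_le_Pt) (use Suc Rvn_nonneg in auto)
  also have "\<dots> \<le> Pt ((Pt^^n) f) j"
    by (rule Pt_mono) (use Suc in auto)
  finally show ?case by simp
qed

lemma Ptn_mpow: "(Pt^^n) f j = (\<Sum>i\<in>{1..k}. mpow k P n i j * f i)" if "j \<in> {1..k}"
  using that
proof (induction n arbitrary: f)
  case 0
  have "(\<Sum>i\<in>{1..k}. mpow k P 0 i j * f i) = (\<Sum>i\<in>{1..k}. if i = j then f i else 0)"
    by (intro sum.cong) auto
  also have "\<dots> = f j" using 0 by (simp add: sum.delta)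
  finally show ?case by simp
next
  case (Suc n)
  have "(Pt^^Suc n) f j = (Pt^^n) (Pt f) j" by (simp add: funpow_Suc_right del: funpow.simps)
  also have "\<dots> = (\<Sum>l\<in>{1..k}. mpow k P n l j * Pt f l)"
    using Suc by simp
  also have "\<dots> = (\<Sum>l\<in>{1..k}. mpow k P n l j * (\<Sum>i\<in>{1..k}. P i l * f i))"
    by (simp add: Pt_def)
  also have "\<dots> = (\<Sum>l\<in>{1..k}. \<Sum>i\<in>{1..k}. P i l * mpow k P n l j * f i)"
    by (simp add: sum_distrib_left algebra_simps)
  also have "\<dots> = (\<Sum>i\<in>{1..k}. \<Sum>l\<in>{1..k}. P i l * mpow k P n l j * f i)"
    by (rule sum.swap)
  also have "\<dots> = (\<Sum>i\<in>{1..k}. (\<Sum>l\<in>{1..k}. P i l * mpow k P n l j) * f i)"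
    by (simp add: sum_distrib_right)
  finally show ?case by simp
qed

lemma mpow_nonneg: "i \<in> {1..k} \<Longrightarrow> j \<in> {1..k} \<Longrightarrow> 0 \<le> mpow k P n i j"
proof (induction n arbitrary: i)
  case 0 then show ?case by simp
next
  case (Suc n) then show ?case
    by (simp, intro sum_nonneg mult_nonneg_nonneg) (auto simp: P_nonneg)
qed

lemma mpow_colsum: "j \<in> {1..k} \<Longrightarrow> (\<Sum>i\<in>{1..k}. mpow k P n i j) = 1"
proof (induction n)
  case 0 then show ?case by (simp add: sum.delta)
next
  case (Suc n)
  have "(\<Sum>i\<in>{1..k}. mpow k P (Suc n) i j) = (\<Sum>i\<in>{1..k}. \<Sum>l\<in>{1..k}. P i l * mpow k P n l j)"
    by simp
  also have "\<dots> = (\<Sum>l\<in>{1..k}. \<Sum>i\<in>{1..k}. P i l * mpow k P n l j)"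
    by (rule sum.swap)
  also have "\<dots> = (\<Sum>l\<in>{1..k}. (\<Sum>i\<in>{1..k}. P i l) * mpow k P n l j)"
    by (simp add: sum_distrib_right)
  also have "\<dots> = (\<Sum>l\<in>{1..k}. mpow k P n l j)"
    by (rule sum.cong[OF refl]) (subst P_colsum, assumption, simp)
  finally show ?case using Suc by simp
qed

lemma mpow_stat: "(\<And>i. i \<in> {1..k} \<Longrightarrow> (\<Sum>j\<in>{1..k}. P i j * d j) = d i) \<Longrightarrow> i \<in> {1..k} \<Longrightarrow>
   (\<Sum>j\<in>{1..k}. mpow k P n i j * d j) = d i"
proof (induction n arbitrary: i)
  case 0
  have "(\<Sum>j\<in>{1..k}. mpow k P 0 i j * d j) = (\<Sum>j\<in>{1..k}. if i = j then d j else 0)"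
    by (intro sum.cong) auto
  then show ?case using 0 by (simp add: sum.delta)
next
  case (Suc n)
  have "(\<Sum>j\<in>{1..k}. mpow k P (Suc n) i j * d j) = (\<Sum>j\<in>{1..k}. \<Sum>l\<in>{1..k}. P i l * mpow k P n l j * d j)"
    by (simp add: sum_distrib_right)
  also have "\<dots> = (\<Sum>l\<in>{1..k}. \<Sum>j\<in>{1..k}. P i l * mpow k P n l j * d j)"
    by (rule sum.swap)
  also have "\<dots> = (\<Sum>l\<in>{1..k}. P i l * (\<Sum>j\<in>{1..k}. mpow k P n l j * d j))"
    by (simp add: sum_distrib_left algebra_simps)
  also have "\<dots> = (\<Sum>l\<in>{1..k}. P i l * d l)"
    using Suc by (intro sum.cong) auto
  finally show ?case using Suc by simp
qed

lemma u_bounds: "j \<in> {1..k} \<Longrightarrow> 0 \<le> u n j \<and> u n j \<le> 1"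
proof (induction n arbitrary: j)
  case 0 then show ?case by (simp add: u_def)
next
  case (Suc n)
  have "u (Suc n) j = Rv (u n) j" by (simp add: u_def)
  moreover have "0 \<le> Rv (u n) j" using Suc by (intro Rv_nonneg) auto
  moreover have "Rv (u n) j \<le> Pt (\<lambda>_. 1) j"
  proof -
    have "Rv (u n) j \<le> Rv (\<lambda>_. 1) j" using Suc by (intro Rv_mono) auto
    also have "\<dots> \<le> Pt (\<lambda>_. 1) j" using Suc by (intro Rv_le_Pt) auto
    finally show ?thesis .
  qed
  moreover have "Pt (\<lambda>_. 1) j = 1" using P_colsum Suc by (simp add: Pt_def)
  ultimately show ?case by simp
qed


lemma m0_exists: "\<exists>m0>0. \<forall>i\<in>{1..k}. \<forall>j\<in>{1..k}. 0 < mpow k P m0 i j"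
proof -
  obtain m where m: "\<forall>i\<in>{1..k}. \<forall>j\<in>{1..k}. 0 < mpow k P m i j"
    using prim unfolding primitive_def by blast
  obtain s i where s: "s \<in> Sing" and i: "i \<in> Inv" using nonempty by blast
  then have "s \<noteq> i" "s \<in> {1..k}" "i \<in> {1..k}" using part by auto
  have "m \<noteq> 0"
  proof
    assume "m = 0"
    then have "mpow k P m s i = 0" using \<open>s \<noteq> i\<close> by simp
    then show False using m \<open>s \<in> {1..k}\<close> \<open>i \<in> {1..k}\<close> by fastforce
  qed
  then show ?thesis using m by blast
qed

lemma contraction: "\<exists>c m0. 0 < c \<and> c < 1 \<and> 0 < m0 \<and> (\<forall>j\<in>{1..k}. u m0 j \<le> c)"
proof -
  obtain m0 where m0: "m0 > 0" "\<forall>i\<in>{1..k}. \<forall>j\<in>{1..k}. 0 < mpow k P m0 i j"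
    using m0_exists by blast
  obtain s0 where s0: "s0 \<in> Sing" using nonempty by blast
  then have s0K: "s0 \<in> {1..k}" using Sing_sub by auto
  obtain m' where m': "m0 = Suc m'" using m0 by (cases m0) auto
  define \<delta> where "\<delta> = Min ((\<lambda>j. mpow k P m0 s0 j) ` {1..k})"
  have Kne: "{1..k} \<noteq> {}" using s0K by auto
  have \<delta>pos: "\<delta> > 0" unfolding \<delta>_def using m0 s0K Kne by (subst Min_gr_iff) auto
  have \<delta>le: "\<delta> \<le> mpow k P m0 s0 j" if "j \<in> {1..k}" for j
    unfolding \<delta>_def using that by (intro Min_le) auto
  define c where "c = max (1 - \<delta>) (1/2)"
  have c: "0 < c" "c < 1" using \<delta>pos unfolding c_def by auto
  have "u m0 j \<le> c" if j: "j \<in> {1..k}" for j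
  proof -
    define ind where "ind = (\<lambda>i. if i \<in> Inv then 1 else (0::real))"
    have Rv1: "Rv (\<lambda>_. 1) = Pt ind"
    proof
      fix x
      have "Pt ind x = (\<Sum>i\<in>{1..k}. if i \<in> Inv then P i x else 0)"
        unfolding Pt_def ind_def by (intro sum.cong) auto
      also have "\<dots> = (\<Sum>i\<in>Inv. P i x)"
        using Inv_sub by (simp add: sum.If_cases Int_absorb1)
      finally show "Rv (\<lambda>_. 1) x = Pt ind x" by (simp add: Rv_def)
    qed
    have "u m0 j = (Rv^^m') (Rv (\<lambda>_. 1)) j"
      unfolding u_def m' by (simp add: funpow_Suc_right del: funpow.simps)
    also have "\<dots> \<le> (Pt^^m') (Rv (\<lambda>_. 1)) j"
      by (rule Rvn_le_Ptn) (use j Rv_nonneg in auto)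
    also have "\<dots> = (Pt^^m0) ind j"
      unfolding Rv1 m' by (simp add: funpow_Suc_right del: funpow.simps)
    also have "\<dots> = (\<Sum>i\<in>{1..k}. mpow k P m0 i j * ind i)"
      by (rule Ptn_mpow[OF j])
    also have "\<dots> = (\<Sum>i\<in>{1..k}. mpow k P m0 i j) - (\<Sum>i\<in>Sing. mpow k P m0 i j)"
    proof -
      have "(\<Sum>i\<in>{1..k}. mpow k P m0 i j * ind i) = (\<Sum>i\<in>Sing. mpow k P m0 i j * ind i) + (\<Sum>i\<in>Inv. mpow k P m0 i j * ind i)"
        by (rule sum_K_split)
      also have "(\<Sum>i\<in>Sing. mpow k P m0 i j * ind i) = 0"
        using part by (intro sum.neutral) (auto simp: ind_def)
      also have "(\<Sum>i\<in>Inv. mpow k P m0 i j * ind i) = (\<Sum>i\<in>Inv. mpow k P m0 i j)"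
        by (intro sum.cong) (auto simp: ind_def)
      also have "(\<Sum>i\<in>Inv. mpow k P m0 i j) = (\<Sum>i\<in>{1..k}. mpow k P m0 i j) - (\<Sum>i\<in>Sing. mpow k P m0 i j)"
        using sum_K_split[of "\<lambda>i. mpow k P m0 i j"] by simp
      finally show ?thesis by simp
    qed
    also have "\<dots> \<le> 1 - mpow k P m0 s0 j"
    proof -
      have "mpow k P m0 s0 j \<le> (\<Sum>i\<in>Sing. mpow k P m0 i j)"
        using s0 Sing_sub j by (intro member_le_sum mpow_nonneg) auto
      then show ?thesis using mpow_colsum[OF j, of m0] by simp
    qed
    also have "\<dots> \<le> c" using \<delta>le[OF j] unfolding c_def by simp
    finally show ?thesis .
  qed
  then show ?thesis using c m0 by blast
qed

lemma u_decay: "\<exists>\<beta>. summable \<beta> \<and> (\<forall>n. 0 \<le> \<beta> n) \<and> (\<forall>n. \<forall>j\<in>{1..k}. u n j \<le> \<beta> n)"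
proof -
  obtain c m0 where c: "0 < c" "c < 1" "0 < m0" and cm: "\<forall>j\<in>{1..k}. u m0 j \<le> c"
    using contraction by blast
  have geom: "u (a * m0 + b) j \<le> c ^ a" if "j \<in> {1..k}" for a b j
    using that
  proof (induction a arbitrary: j)
    case 0 then show ?case using u_bounds by simp
  next
    case (Suc a)
    have eq: "Suc a * m0 + b = (a * m0 + b) + m0" by simp
    have "u (Suc a * m0 + b) j = (Rv^^(a * m0 + b)) ((Rv^^m0) (\<lambda>_. 1)) j"
      by (simp only: u_def eq funpow_add comp_def)
    also have "\<dots> \<le> (Rv^^(a * m0 + b)) (\<lambda>i. c * 1) j"
      by (rule Rvn_mono) (use Suc cm in \<open>auto simp: u_def\<close>)
    also have "\<dots> = c * u (a * m0 + b) j"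
      by (simp only: Rvn_scale u_def)
    also have "\<dots> \<le> c * c ^ a"
      using Suc c by (intro mult_left_mono) auto
    finally show ?case by simp
  qed
  define \<beta> where "\<beta> n = c ^ (n div m0)" for n
  have ub: "u n j \<le> \<beta> n" if "j \<in> {1..k}" for n j
    using geom[OF that, of "n div m0" "n mod m0"] by (simp add: \<beta>_def)
  define \<rho> where "\<rho> = c powr (1 / real m0)"
  have \<rho>: "0 < \<rho>" "\<rho> < 1"
  proof -
    show "0 < \<rho>" unfolding \<rho>_def using c by simp
    have "c powr (1 / real m0) < 1 powr (1 / real m0)"
      using c by (intro powr_less_mono2) auto
    then show "\<rho> < 1" unfolding \<rho>_def by simp
  qed
  have bnd: "\<beta> n \<le> (1 / c) * \<rho> ^ n" for n
  proof -
    have "real (n div m0) \<ge> real n / real m0 - 1"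
    proof -
      have "real n = real (n div m0) * real m0 + real (n mod m0)"
        by (metis of_nat_add of_nat_mult div_mult_mod_eq)
      moreover have "real (n mod m0) < real m0" using c by simp
      ultimately have "real n < (real (n div m0) + 1) * real m0" by (simp add: algebra_simps)
      then show ?thesis using c by (simp add: field_simps)
    qed
    then have "c powr real (n div m0) \<le> c powr (real n / real m0 - 1)"
      using c by (intro powr_mono') auto
    also have "\<dots> = (1 / c) * \<rho> ^ n"
    proof -
      have "\<rho> ^ n = \<rho> powr real n" using \<rho> by (simp add: powr_realpow)
      also have "\<dots> = c powr (real n / real m0)" unfolding \<rho>_def by (simp add: powr_powr)
      finally have "\<rho> ^ n = c powr (real n / real m0)" .
      moreover have "c powr (real n / real m0 - 1) = c powr (real n / real m0) / c"
        using c by (simp add: powr_diff)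
      ultimately show ?thesis by simp
    qed
    finally show ?thesis unfolding \<beta>_def using c by (simp add: powr_realpow)
  qed
  have "summable (\<lambda>n. (1 / c) * \<rho> ^ n)"
    using \<rho> by (intro summable_mult summable_geometric) auto
  then have "summable \<beta>"
    by (rule summable_comparison_test[rotated]) (use bnd c in \<open>auto simp: \<beta>_def\<close>)
  moreover have "\<forall>n. 0 \<le> \<beta> n" using c by (simp add: \<beta>_def)
  ultimately show ?thesis using ub by blast
qed

lemma u_lim: "\<exists>\<beta>. summable \<beta> \<and> \<beta> \<longlonglongrightarrow> 0 \<and> (\<forall>n. 0 \<le> \<beta> n) \<and> (\<forall>n. \<forall>j\<in>{1..k}. u n j \<le> \<beta> n)"
  using u_decay summable_LIMSEQ_zero by blast

lemma Rvn_bound: "(\<And>i. i \<in> {1..k} \<Longrightarrow> \<bar>h i\<bar> \<le> H) \<Longrightarrow> j \<in> {1..k} \<Longrightarrow> \<bar>(Rv^^n) h j\<bar> \<le> H * u n j"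
proof (induction n arbitrary: j)
  case 0 then show ?case by (simp add: u_def)
next
  case (Suc n)
  have "\<bar>(Rv^^Suc n) h j\<bar> = \<bar>\<Sum>i\<in>Inv. P i j * (Rv^^n) h i\<bar>" by (simp add: Rv_def)
  also have "\<dots> \<le> (\<Sum>i\<in>Inv. \<bar>P i j * (Rv^^n) h i\<bar>)" by (rule sum_abs)
  also have "\<dots> \<le> (\<Sum>i\<in>Inv. P i j * (H * u n i))"
  proof (rule sum_mono)
    fix i assume i: "i \<in> Inv"
    then have iK: "i \<in> {1..k}" using Inv_sub by auto
    have "\<bar>P i j * (Rv^^n) h i\<bar> = P i j * \<bar>(Rv^^n) h i\<bar>"
      using P_nonneg[OF iK Suc.prems(2)] by (simp add: abs_mult)
    also have "\<dots> \<le> P i j * (H * u n i)"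
      using Suc.IH[OF Suc.prems(1) iK] P_nonneg[OF iK Suc.prems(2)] by (rule mult_left_mono)
    finally show "\<bar>P i j * (Rv^^n) h i\<bar> \<le> P i j * (H * u n i)" .
  qed
  also have "\<dots> = H * u (Suc n) j" by (simp add: u_def Rv_def sum_distrib_left algebra_simps)
  finally show ?case .
qed

lemma stat_unique:
  assumes nn: "\<And>j. j \<in> {1..k} \<Longrightarrow> 0 \<le> \<nu> j" and s1: "(\<Sum>j\<in>{1..k}. \<nu> j) = 1"
    and st: "\<And>i. i \<in> {1..k} \<Longrightarrow> (\<Sum>j\<in>{1..k}. P i j * \<nu> j) = \<nu> i"
  shows "\<forall>j\<in>{1..k}. \<nu> j = q j"
proof (rule ccontr)
  define d where "d j = \<nu> j - q j" for j
  assume "\<not> ?thesis"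
  then obtain j0 where j0: "j0 \<in> {1..k}" "d j0 \<noteq> 0" unfolding d_def by auto
  have dsum: "(\<Sum>j\<in>{1..k}. d j) = 0" using s1 q_prob by (simp add: d_def sum_subtractf)
  have dst: "(\<Sum>j\<in>{1..k}. P i j * d j) = d i" if "i \<in> {1..k}" for i
    using st[OF that] q_stat that by (simp add: d_def algebra_simps sum_subtractf)
  obtain m0 where m0: "m0 > 0" "\<forall>i\<in>{1..k}. \<forall>j\<in>{1..k}. 0 < mpow k P m0 i j"
    using m0_exists by blast
  define M where "M = mpow k P m0"
  have Md: "(\<Sum>j\<in>{1..k}. M i j * d j) = d i" if "i \<in> {1..k}" for i
    unfolding M_def by (rule mpow_stat[OF dst that])
  have pos: "\<exists>j\<in>{1..k}. d j > 0" and neg: "\<exists>j\<in>{1..k}. d j < 0"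
  proof -
    show "\<exists>j\<in>{1..k}. d j > 0"
    proof (rule ccontr)
      assume "\<not> ?thesis"
      then have "\<forall>j\<in>{1..k}. d j \<le> 0" by auto
      moreover have "0 < (\<Sum>j\<in>{1..k}. - d j)"
        using j0 \<open>\<forall>j\<in>{1..k}. d j \<le> 0\<close>
        by (intro sum_pos_ex[where i=j0]) force+
      ultimately show False using dsum by (simp add: sum_negf)
    qed
    show "\<exists>j\<in>{1..k}. d j < 0"
    proof (rule ccontr)
      assume "\<not> ?thesis"
      then have "\<forall>j\<in>{1..k}. d j \<ge> 0" by auto
      moreover have "(\<Sum>j\<in>{1..k}. d j) > 0"
        using j0 \<open>\<forall>j\<in>{1..k}. d j \<ge> 0\<close>
        by (intro sum_pos_ex[where i=j0]) force+
      ultimately show False using dsum by simp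
    qed
  qed
  then obtain jp jn where jp: "jp \<in> {1..k}" "d jp > 0" and jn: "jn \<in> {1..k}" "d jn < 0" by blast
  have strict: "\<bar>d i\<bar> < (\<Sum>j\<in>{1..k}. M i j * \<bar>d j\<bar>)" if i: "i \<in> {1..k}" for i
  proof (cases "d i \<ge> 0")
    case True
    have "(\<Sum>j\<in>{1..k}. M i j * \<bar>d j\<bar>) - \<bar>d i\<bar> = (\<Sum>j\<in>{1..k}. M i j * (\<bar>d j\<bar> - d j))"
      using True Md[OF i] by (simp add: sum_subtractf algebra_simps)
    also have "\<dots> > 0"
    proof (rule sum_pos_ex[where i=jn])
      show "\<forall>j\<in>{1..k}. 0 \<le> M i j * (\<bar>d j\<bar> - d j)"
      proof
        fix j assume j: "j \<in> {1..k}"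
        have "0 < M i j" using m0 i j unfolding M_def by blast
        moreover have "0 \<le> \<bar>d j\<bar> - d j" by simp
        ultimately show "0 \<le> M i j * (\<bar>d j\<bar> - d j)" by simp
      qed
      have "0 < M i jn" using m0 i jn unfolding M_def by blast
      then show "0 < M i jn * (\<bar>d jn\<bar> - d jn)" using jn by (intro mult_pos_pos) auto
    qed (use jn in auto)
    finally show ?thesis by simp
  next
    case False
    have "(\<Sum>j\<in>{1..k}. M i j * \<bar>d j\<bar>) - \<bar>d i\<bar> = (\<Sum>j\<in>{1..k}. M i j * (\<bar>d j\<bar> + d j))"
      using False Md[OF i] by (simp add: sum.distrib algebra_simps)
    also have "\<dots> > 0"
    proof (rule sum_pos_ex[where i=jp])
      show "\<forall>j\<in>{1..k}. 0 \<le> M i j * (\<bar>d j\<bar> + d j)"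
      proof
        fix j assume j: "j \<in> {1..k}"
        have "0 < M i j" using m0 i j unfolding M_def by blast
        moreover have "0 \<le> \<bar>d j\<bar> + d j" by simp
        ultimately show "0 \<le> M i j * (\<bar>d j\<bar> + d j)" by simp
      qed
      have "0 < M i jp" using m0 i jp unfolding M_def by blast
      then show "0 < M i jp * (\<bar>d jp\<bar> + d jp)" using jp by (intro mult_pos_pos) auto
    qed (use jp in auto)
    finally show ?thesis by simp
  qed
  have "(\<Sum>i\<in>{1..k}. \<bar>d i\<bar>) < (\<Sum>i\<in>{1..k}. \<Sum>j\<in>{1..k}. M i j * \<bar>d j\<bar>)"
    using strict jp by (intro sum_strict_mono) auto
  also have "\<dots> = (\<Sum>j\<in>{1..k}. (\<Sum>i\<in>{1..k}. M i j) * \<bar>d j\<bar>)"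
    by (subst sum.swap) (simp add: sum_distrib_right)
  also have "\<dots> = (\<Sum>j\<in>{1..k}. \<bar>d j\<bar>)"
    by (rule sum.cong[OF refl]) (subst M_def, subst mpow_colsum, assumption, simp)
  finally show False by simp
qed

lemma q_Rv: "(\<Sum>i\<in>Inv. q i * g i) = (\<Sum>j\<in>{1..k}. q j * Rv g j)"
proof -
  have "(\<Sum>j\<in>{1..k}. q j * Rv g j) = (\<Sum>j\<in>{1..k}. \<Sum>i\<in>Inv. P i j * q j * g i)"
    by (simp add: Rv_def sum_distrib_left algebra_simps)
  also have "\<dots> = (\<Sum>i\<in>Inv. \<Sum>j\<in>{1..k}. P i j * q j * g i)" by (rule sum.swap)
  also have "\<dots> = (\<Sum>i\<in>Inv. (\<Sum>j\<in>{1..k}. P i j * q j) * g i)" by (simp add: sum_distrib_right)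
  also have "\<dots> = (\<Sum>i\<in>Inv. q i * g i)"
    using q_stat Inv_sub by (intro sum.cong) auto
  finally show ?thesis by simp
qed

lemma kac: "(\<Sum>m<n. \<Sum>s\<in>Sing. q s * (Rv^^m) h s)
   = (\<Sum>j\<in>{1..k}. q j * h j) - (\<Sum>j\<in>{1..k}. q j * (Rv^^n) h j)"
proof -
  define F where "F m = (\<Sum>j\<in>{1..k}. q j * (Rv^^m) h j)" for m
  have "(\<Sum>s\<in>Sing. q s * (Rv^^m) h s) = F m - F (Suc m)" for m
  proof -
    have "F m = (\<Sum>s\<in>Sing. q s * (Rv^^m) h s) + (\<Sum>i\<in>Inv. q i * (Rv^^m) h i)"
      unfolding F_def by (rule sum_K_split)
    moreover have "(\<Sum>i\<in>Inv. q i * (Rv^^m) h i) = F (Suc m)"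
      unfolding F_def by (simp add: q_Rv)
    ultimately show ?thesis by simp
  qed
  then have "(\<Sum>m<n. \<Sum>s\<in>Sing. q s * (Rv^^m) h s) = (\<Sum>m<n. F m - F (Suc m))" by simp
  also have "\<dots> = F 0 - F n" by (rule sum_lessThan_telescope')
  finally show ?thesis by (simp add: F_def)
qed

end


lemma dir_nth[simp]: "dir t $ 1 = cos t" "dir t $ 2 = sin t"
  by (simp_all add: dir_def)

lemma vec2_eq: "(v::real^2) = w \<longleftrightarrow> v $ 1 = w $ 1 \<and> v $ 2 = w $ 2"
  by (simp add: vec_eq_iff forall_2)

lemma dir_nz: "dir t \<noteq> 0"
proof
  assume h: "dir t = 0"
  have "cos t = 0" using arg_cong[OF h, of "\<lambda>v. v $ 1"] by simp
  moreover have "sin t = 0" using arg_cong[OF h, of "\<lambda>v. v $ 2"] by simp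
  ultimately have "cos t = 0" "sin t = 0" by auto
  then show False using sin_cos_squared_add[of t] by simp
qed

lemma mv_dir: "(B *v dir t) $ 1 = B$1$1 * cos t + B$1$2 * sin t"
  "(B *v dir t) $ 2 = B$2$1 * cos t + B$2$2 * sin t"
  by (simp_all add: matrix_vector_mult_def sum_2)

lemma proj_unique:
  assumes "0 \<le> a" "a < pi" "0 \<le> b" "b < pi" "c \<noteq> 0" "c' \<noteq> 0"
    and eq: "c *\<^sub>R dir a = c' *\<^sub>R dir b"
  shows "a = b"
proof -
  have e1: "c * cos a = c' * cos b" using arg_cong[OF eq, of "\<lambda>v. v $ 1"] by simp
  have e2: "c * sin a = c' * sin b" using arg_cong[OF eq, of "\<lambda>v. v $ 2"] by simp
  have "c' * c * sin (b - a) = (c' * sin b) * (c * cos a) - (c' * cos b) * (c * sin a)"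
    by (simp add: sin_diff algebra_simps)
  also have "\<dots> = (c * sin a) * (c * cos a) - (c * cos a) * (c * sin a)" by (simp only: e1[symmetric] e2[symmetric])
  also have "\<dots> = 0" by simp
  finally have "sin (b - a) = 0" using assms(5,6) by simp
  then have "b - a = 0" by (intro sin_eq_0_pi[of "b - a"]) (use assms(1-4) in auto)
  then show ?thesis by simp
qed

definition projf :: "real^2 \<Rightarrow> real" where
  "projf v = (if v $ 2 = 0 then 0 else pi/2 - arctan (v $ 1 / v $ 2))"

lemma projf_prop:
  assumes "v \<noteq> 0"
  shows "0 \<le> projf v \<and> projf v < pi \<and> (\<exists>c. c \<noteq> 0 \<and> v = c *\<^sub>R dir (projf v))"
proof (cases "v $ 2 = 0")
  case True
  then have "v $ 1 \<noteq> 0" using assms vec2_eq[of v 0] by auto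
  moreover have "v = (v $ 1) *\<^sub>R dir 0" using True by (simp add: vec2_eq)
  ultimately show ?thesis using True by (auto simp: projf_def)
next
  case False
  define x where "x = v $ 1 / v $ 2"
  define t where "t = pi/2 - arctan x"
  have t: "projf v = t" using False by (simp add: projf_def t_def x_def)
  have bnd: "0 < t" "t < pi" using arctan_bounded[of x] by (auto simp: t_def)
  have sq: "sqrt (1 + x\<^sup>2) > 0" by (simp add: add_pos_nonneg)
  have ct: "cos t = x / sqrt (1 + x\<^sup>2)" unfolding t_def by (simp add: cos_diff sin_arctan)
  have st: "sin t = 1 / sqrt (1 + x\<^sup>2)" unfolding t_def by (simp add: sin_diff cos_arctan)
  define c where "c = v $ 2 * sqrt (1 + x\<^sup>2)"
  have "c \<noteq> 0" using False sq by (simp add: c_def)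
  moreover have "v = c *\<^sub>R dir t"
    using False sq unfolding vec2_eq by (simp add: c_def ct st x_def)
  ultimately show ?thesis using t bnd by auto
qed

lemma proj_eq: "v \<noteq> 0 \<Longrightarrow> proj v = projf v"
  unfolding proj_def
proof (rule the_equality)
  assume v: "v \<noteq> 0"
  show "0 \<le> projf v \<and> projf v < pi \<and> (\<exists>c. c \<noteq> 0 \<and> v = c *\<^sub>R dir (projf v))"
    by (rule projf_prop[OF v])
  fix t assume t: "0 \<le> t \<and> t < pi \<and> (\<exists>c. c \<noteq> 0 \<and> v = c *\<^sub>R dir t)"
  then obtain c where c: "c \<noteq> 0" "v = c *\<^sub>R dir t" by blast
  obtain c' where c': "c' \<noteq> 0" "v = c' *\<^sub>R dir (projf v)" using projf_prop[OF v] by blast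
  show "t = projf v"
    by (rule proj_unique[where c=c and c'=c']) (use t c c' projf_prop[OF v] in auto)
qed

lemma proj_range: "v \<noteq> 0 \<Longrightarrow> proj v \<in> {0..<pi}"
  using proj_eq projf_prop by fastforce

lemma range_pt_range: assumes "rank B = 1" shows "range_pt B \<in> {0..<pi}"
proof -
  have "B \<noteq> 0" using assms rank_eq_0[of B] by auto
  then obtain x where "B *v x \<noteq> 0"
    using matrix_eq[of B 0] by auto
  then have "\<exists>v. v \<noteq> 0 \<and> v \<in> range (\<lambda>x. B *v x)" by blast
  then have "(SOME v. v \<noteq> 0 \<and> v \<in> range (\<lambda>x. B *v x)) \<noteq> 0" by (rule someI2_ex) auto
  then show ?thesis unfolding range_pt_def by (rule proj_range)
qed

lemma inv_nz: "invertible B \<Longrightarrow> B *v dir t \<noteq> 0"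
  using inj_matrix_vector_mult[of B] dir_nz[of t]
  by (metis injD matrix_vector_mult_0_right)

lemma pact_inv: "invertible B \<Longrightarrow> rank B \<noteq> 1 \<Longrightarrow> pact B t =
   (if B$2$1 * cos t + B$2$2 * sin t = 0 then 0
    else pi/2 - arctan ((B$1$1 * cos t + B$1$2 * sin t) / (B$2$1 * cos t + B$2$2 * sin t)))"
  unfolding pact_def using proj_eq[OF inv_nz] by (simp add: projf_def mv_dir)

context MC
begin

lemma pact_sing: "s \<in> Sing \<Longrightarrow> pact (A s) t = range_pt (A s)"
  using sing by (simp add: pact_def)

lemma pact_range: "i \<in> {1..k} \<Longrightarrow> pact (A i) t \<in> {0..<pi}"
proof (cases "rank (A i) = 1")
  case True then show ?thesis using range_pt_range[OF True] by (simp add: pact_def)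
next
  case False
  assume i: "i \<in> {1..k}"
  then have "i \<in> Inv" using False sing part by auto
  then have "invertible (A i)" using inv by auto
  then have "proj (A i *v dir t) \<in> {0..<pi}" by (intro proj_range inv_nz)
  then show ?thesis using False by (simp add: pact_def)
qed

lemma pact_borel: "i \<in> {1..k} \<Longrightarrow> pact (A i) \<in> borel_measurable borel"
proof (cases "rank (A i) = 1")
  case True
  then have "pact (A i) = (\<lambda>_. range_pt (A i))" by (simp add: pact_def fun_eq_iff)
  then show ?thesis by simp
next
  case False
  assume i: "i \<in> {1..k}"
  then have "i \<in> Inv" using False sing part by auto
  then have "invertible (A i)" using inv by auto
  then have eq: "pact (A i) = (\<lambda>t. if (A i)$2$1 * cos t + (A i)$2$2 * sin t = 0 then 0
    else pi/2 - arctan (((A i)$1$1 * cos t + (A i)$1$2 * sin t) / ((A i)$2$1 * cos t + (A i)$2$2 * sin t)))"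
    using False by (simp add: pact_inv fun_eq_iff)
  show ?thesis unfolding eq by measurable
qed

lemma pact_meas: assumes i: "i \<in> {1..k}" shows
  "pact (A i) \<in> restrict_space borel {0..<pi} \<rightarrow>\<^sub>M restrict_space borel {0..<pi}"
proof (rule measurable_restrict_space2)
  show "pact (A i) \<in> space (restrict_space borel {0..<pi}) \<rightarrow> {0..<pi}"
    using pact_range[OF i] by auto
  show "pact (A i) \<in> restrict_space borel {0..<pi} \<rightarrow>\<^sub>M borel"
    by (rule measurable_restrict_space1, rule pact_borel[OF i])
qed

end


context MC
begin

definition rp :: "nat \<Rightarrow> real" where "rp s = range_pt (A s)"

lemma rp_range: "s \<in> Sing \<Longrightarrow> rp s \<in> {0..<pi}"
  unfolding rp_def using sing by (intro range_pt_range) auto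

definition QI :: "(nat \<times> real \<Rightarrow> real) \<Rightarrow> nat \<times> real \<Rightarrow> real" where
  "QI \<phi> = (\<lambda>(j, t). \<Sum>i\<in>Inv. \<phi> (i, pact (A i) t) * P i j)"

definition QS :: "(nat \<times> real \<Rightarrow> real) \<Rightarrow> nat \<times> real \<Rightarrow> real" where
  "QS \<phi> = (\<lambda>(j, t). \<Sum>s\<in>Sing. \<phi> (s, rp s) * P s j)"

lemma Qop_split: "Qop k A P \<phi> x = QI \<phi> x + QS \<phi> x"
proof -
  obtain j t where x: "x = (j, t)" by (cases x)
  have "Qop k A P \<phi> x = (\<Sum>i\<in>{1..k}. \<phi> (i, pact (A i) t) * P i j)"
    unfolding x Qop_def by simp
  also have "\<dots> = (\<Sum>i\<in>Sing. \<phi> (i, pact (A i) t) * P i j) + (\<Sum>i\<in>Inv. \<phi> (i, pact (A i) t) * P i j)"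
    by (rule sum_K_split)
  also have "(\<Sum>i\<in>Sing. \<phi> (i, pact (A i) t) * P i j) = QS \<phi> x"
    unfolding x QS_def rp_def by (auto simp: pact_sing intro!: sum.cong)
  finally show ?thesis by (simp add: x QI_def)
qed

lemma QI_as_Qop: "QI \<phi> = Qop k A P (\<lambda>x. if fst x \<in> Inv then \<phi> x else 0)"
proof
  fix x :: "nat \<times> real"
  obtain j t where x: "x = (j, t)" by (cases x)
  have "Qop k A P (\<lambda>x. if fst x \<in> Inv then \<phi> x else 0) x
     = (\<Sum>i\<in>{1..k}. (if i \<in> Inv then \<phi> (i, pact (A i) t) else 0) * P i j)"
    unfolding x Qop_def by simp
  also have "\<dots> = (\<Sum>i\<in>Sing. (if i \<in> Inv then \<phi> (i, pact (A i) t) else 0) * P i j)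
       + (\<Sum>i\<in>Inv. (if i \<in> Inv then \<phi> (i, pact (A i) t) else 0) * P i j)"
    by (rule sum_K_split)
  also have "(\<Sum>i\<in>Sing. (if i \<in> Inv then \<phi> (i, pact (A i) t) else 0) * P i j) = 0"
    using part by (intro sum.neutral) auto
  also have "(\<Sum>i\<in>Inv. (if i \<in> Inv then \<phi> (i, pact (A i) t) else 0) * P i j) = QI \<phi> x"
    unfolding x QI_def by (auto intro!: sum.cong)
  finally show "QI \<phi> x = Qop k A P (\<lambda>x. if fst x \<in> Inv then \<phi> x else 0) x" by simp
qed

lemma QIn_add: "(QI^^n) (\<lambda>x. \<phi> x + \<psi> x) = (\<lambda>x. (QI^^n) \<phi> x + (QI^^n) \<psi> x)"
proof (induction n)
  case 0 then show ?case by simp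
next
  case (Suc n) then show ?case
    by (simp add: QI_def fun_eq_iff sum.distrib algebra_simps split: prod.splits)
qed

lemma QIn_fst: "(QI^^n) (\<lambda>x. h (fst x)) = (\<lambda>x. (Rv^^n) h (fst x))"
proof (induction n)
  case 0 then show ?case by simp
next
  case (Suc n) then show ?case
    by (simp add: QI_def Rv_def fun_eq_iff algebra_simps split: prod.splits)
qed

abbreviation SP :: "(nat \<times> real) set" where "SP \<equiv> {1..k} \<times> {0..<pi}"

lemma QIn_bound:
  assumes B: "\<And>x. x \<in> SP \<Longrightarrow> \<bar>\<phi> x\<bar> \<le> B"
  shows "j \<in> {1..k} \<Longrightarrow> t \<in> {0..<pi} \<Longrightarrow> \<bar>(QI^^n) \<phi> (j, t)\<bar> \<le> B * u n j"
proof (induction n arbitrary: j t)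
  case 0 then show ?case using B by (simp add: u_def)
next
  case (Suc n)
  have "\<bar>(QI^^Suc n) \<phi> (j, t)\<bar> = \<bar>\<Sum>i\<in>Inv. (QI^^n) \<phi> (i, pact (A i) t) * P i j\<bar>"
    by (simp add: QI_def)
  also have "\<dots> \<le> (\<Sum>i\<in>Inv. \<bar>(QI^^n) \<phi> (i, pact (A i) t) * P i j\<bar>)" by (rule sum_abs)
  also have "\<dots> \<le> (\<Sum>i\<in>Inv. B * u n i * P i j)"
  proof (rule sum_mono)
    fix i assume i: "i \<in> Inv"
    then have iK: "i \<in> {1..k}" using Inv_sub by auto
    have "\<bar>(QI^^n) \<phi> (i, pact (A i) t) * P i j\<bar> = \<bar>(QI^^n) \<phi> (i, pact (A i) t)\<bar> * P i j"
      using P_nonneg[OF iK Suc.prems(1)] by (simp add: abs_mult)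
    also have "\<dots> \<le> B * u n i * P i j"
      using Suc.IH[OF iK pact_range[OF iK]] P_nonneg[OF iK Suc.prems(1)] by (rule mult_right_mono)
    finally show "\<bar>(QI^^n) \<phi> (i, pact (A i) t) * P i j\<bar> \<le> B * u n i * P i j" .
  qed
  also have "\<dots> = B * u (Suc n) j" by (simp add: u_def Rv_def sum_distrib_left algebra_simps)
  finally show ?case .
qed

lemma Qop_bound:
  assumes B: "\<And>x. x \<in> SP \<Longrightarrow> \<bar>\<phi> x\<bar> \<le> B" and j: "j \<in> {1..k}"
  shows "\<bar>Qop k A P \<phi> (j, t)\<bar> \<le> B"
proof -
  have "\<bar>Qop k A P \<phi> (j, t)\<bar> \<le> (\<Sum>i\<in>{1..k}. \<bar>\<phi> (i, pact (A i) t) * P i j\<bar>)"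
    unfolding Qop_def by (simp add: sum_abs)
  also have "\<dots> \<le> (\<Sum>i\<in>{1..k}. B * P i j)"
  proof (rule sum_mono)
    fix i assume iK: "i \<in> {1..k}"
    have "\<bar>\<phi> (i, pact (A i) t) * P i j\<bar> = \<bar>\<phi> (i, pact (A i) t)\<bar> * P i j"
      using P_nonneg[OF iK j] by (simp add: abs_mult)
    also have "\<dots> \<le> B * P i j"
      using B[of "(i, pact (A i) t)"] iK pact_range[OF iK] P_nonneg[OF iK j]
      by (intro mult_right_mono) auto
    finally show "\<bar>\<phi> (i, pact (A i) t) * P i j\<bar> \<le> B * P i j" .
  qed
  also have "\<dots> = B" using P_colsum[OF j] by (simp add: sum_distrib_left[symmetric])
  finally show ?thesis .
qed

definition Lterm :: "(nat \<times> real \<Rightarrow> real) \<Rightarrow> nat \<Rightarrow> real" where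
  "Lterm \<phi> m = (\<Sum>s\<in>Sing. q s * (QI^^m) \<phi> (s, rp s))"

definition Lf :: "(nat \<times> real \<Rightarrow> real) \<Rightarrow> real" where
  "Lf \<phi> = suminf (Lterm \<phi>)"

lemma Lterm_bound:
  assumes B: "\<And>x. x \<in> SP \<Longrightarrow> \<bar>\<phi> x\<bar> \<le> B"
  shows "\<bar>Lterm \<phi> m\<bar> \<le> (\<Sum>s\<in>Sing. q s * (B * u m s))"
  unfolding Lterm_def
proof (rule order_trans[OF sum_abs sum_mono])
  fix s assume s: "s \<in> Sing"
  then have sK: "s \<in> {1..k}" using Sing_sub by auto
  have "\<bar>q s * (QI^^m) \<phi> (s, rp s)\<bar> = q s * \<bar>(QI^^m) \<phi> (s, rp s)\<bar>"
    using q_prob sK by (simp add: abs_mult)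
  also have "\<dots> \<le> q s * (B * u m s)"
    using QIn_bound[OF B sK rp_range[OF s]] q_prob sK by (intro mult_left_mono) auto
  finally show "\<bar>q s * (QI^^m) \<phi> (s, rp s)\<bar> \<le> q s * (B * u m s)" .
qed

lemma Lterm_sums:
  assumes B: "\<And>x. x \<in> SP \<Longrightarrow> \<bar>\<phi> x\<bar> \<le> B"
  shows "Lterm \<phi> sums Lf \<phi>"
proof -
  obtain \<beta> where \<beta>: "summable \<beta>" "\<forall>n. 0 \<le> \<beta> n" "\<forall>n. \<forall>j\<in>{1..k}. u n j \<le> \<beta> n"
    using u_decay by blast
  define C where "C = (\<Sum>s\<in>Sing. q s) * \<bar>B\<bar>"
  have "\<bar>Lterm \<phi> m\<bar> \<le> C * \<beta> m" for m
  proof -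
    have "\<bar>Lterm \<phi> m\<bar> \<le> (\<Sum>s\<in>Sing. q s * (B * u m s))" by (rule Lterm_bound[OF B])
    also have "\<dots> \<le> (\<Sum>s\<in>Sing. q s * (\<bar>B\<bar> * \<beta> m))"
    proof (rule sum_mono)
      fix s assume s: "s \<in> Sing"
      then have sK: "s \<in> {1..k}" using Sing_sub by auto
      have "B * u m s \<le> \<bar>B\<bar> * \<beta> m"
        using \<beta> sK u_bounds[OF sK, of m]
        by (meson abs_ge_self abs_ge_zero mult_mono order.trans)
      then show "q s * (B * u m s) \<le> q s * (\<bar>B\<bar> * \<beta> m)"
        using q_prob sK by (intro mult_left_mono) auto
    qed
    also have "\<dots> = C * \<beta> m" by (simp add: C_def sum_distrib_right[symmetric] mult.assoc)
    finally show ?thesis .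
  qed
  then have "summable (Lterm \<phi>)"
    by (intro summable_comparison_test[OF _ summable_mult[OF \<beta>(1)]]) auto
  then show ?thesis by (simp add: Lf_def summable_sums)
qed

lemma Rvn_tendsto:
  assumes H: "\<And>j. j \<in> {1..k} \<Longrightarrow> \<bar>h j\<bar> \<le> H" and j: "j \<in> {1..k}"
  shows "(\<lambda>n. (Rv^^n) h j) \<longlonglongrightarrow> 0"
proof -
  obtain \<beta> where \<beta>: "summable \<beta>" "\<forall>n. 0 \<le> \<beta> n" "\<forall>n. \<forall>j\<in>{1..k}. u n j \<le> \<beta> n"
    using u_decay by blast
  have b0: "\<beta> \<longlonglongrightarrow> 0" using \<beta>(1) by (rule summable_LIMSEQ_zero)
  have bnd: "norm ((Rv^^n) h j) \<le> \<bar>H\<bar> * \<beta> n" for n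
  proof -
    have "norm ((Rv^^n) h j) \<le> H * u n j" using Rvn_bound[OF H j] by simp
    also have "\<dots> \<le> \<bar>H\<bar> * \<beta> n"
      using \<beta> j u_bounds[OF j, of n] by (meson abs_ge_self abs_ge_zero mult_mono order.trans)
    finally show ?thesis .
  qed
  have g0: "(\<lambda>n. \<bar>H\<bar> * \<beta> n) \<longlonglongrightarrow> 0" using tendsto_mult_right_zero[OF b0] by simp
  show ?thesis by (rule Lim_null_comparison[OF always_eventually[OF allI[OF bnd]] g0])
qed

lemma Lf_inv:
  assumes B: "\<And>x. x \<in> SP \<Longrightarrow> \<bar>\<xi> x\<bar> \<le> B"
  shows "Lf (Qop k A P \<xi>) = Lf \<xi>"
proof -
  define h where "h j = (\<Sum>s'\<in>Sing. \<xi> (s', rp s') * P s' j)" for j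
  have QSh: "QS \<xi> = (\<lambda>x. h (fst x))" by (auto simp: QS_def h_def fun_eq_iff)
  have bterm: "Lterm (Qop k A P \<xi>) m = Lterm \<xi> (Suc m) + (\<Sum>s\<in>Sing. q s * (Rv^^m) h s)" for m
  proof -
    have "Qop k A P \<xi> = (\<lambda>x. QI \<xi> x + QS \<xi> x)"
      by (rule ext, rule Qop_split)
    then have "(QI^^m) (Qop k A P \<xi>) = (QI^^m) (\<lambda>x. QI \<xi> x + QS \<xi> x)"
      by simp
    also have "\<dots> = (\<lambda>x. (QI^^Suc m) \<xi> x + (Rv^^m) h (fst x))"
      by (simp add: QIn_add QSh QIn_fst funpow_Suc_right del: funpow.simps)
    finally show ?thesis
      by (simp add: Lterm_def sum.distrib algebra_simps)
  qed
  have a0: "(\<Sum>j\<in>{1..k}. q j * h j) = Lterm \<xi> 0"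
  proof -
    have "(\<Sum>j\<in>{1..k}. q j * h j) = (\<Sum>j\<in>{1..k}. \<Sum>s'\<in>Sing. q j * (\<xi> (s', rp s') * P s' j))"
      unfolding h_def by (simp add: sum_distrib_left)
    also have "\<dots> = (\<Sum>s'\<in>Sing. \<Sum>j\<in>{1..k}. q j * (\<xi> (s', rp s') * P s' j))"
      by (rule sum.swap)
    also have "\<dots> = (\<Sum>s'\<in>Sing. \<xi> (s', rp s') * (\<Sum>j\<in>{1..k}. P s' j * q j))"
      by (simp add: sum_distrib_left algebra_simps)
    also have "\<dots> = (\<Sum>s'\<in>Sing. \<xi> (s', rp s') * q s')"
      using q_stat Sing_sub by (intro sum.cong) auto
    finally show ?thesis by (simp add: Lterm_def algebra_simps)
  qed
  have part_eq: "(\<Sum>m<n. Lterm (Qop k A P \<xi>) m) = (\<Sum>m<Suc n. Lterm \<xi> m) - (\<Sum>j\<in>{1..k}. q j * (Rv^^n) h j)" for n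
  proof -
    have "(\<Sum>m<n. Lterm (Qop k A P \<xi>) m) = (\<Sum>m<n. Lterm \<xi> (Suc m)) + (\<Sum>m<n. \<Sum>s\<in>Sing. q s * (Rv^^m) h s)"
      by (simp add: bterm sum.distrib)
    also have "(\<Sum>m<n. \<Sum>s\<in>Sing. q s * (Rv^^m) h s) = Lterm \<xi> 0 - (\<Sum>j\<in>{1..k}. q j * (Rv^^n) h j)"
      using kac[where n=n and h=h] a0 by simp
    also have "(\<Sum>m<n. Lterm \<xi> (Suc m)) + (Lterm \<xi> 0 - (\<Sum>j\<in>{1..k}. q j * (Rv^^n) h j))
        = (\<Sum>m<Suc n. Lterm \<xi> m) - (\<Sum>j\<in>{1..k}. q j * (Rv^^n) h j)"
      using sum.lessThan_Suc_shift[of "Lterm \<xi>" n] by linarith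
    finally show ?thesis .
  qed
  have hb: "\<bar>h j\<bar> \<le> (\<Sum>s'\<in>Sing. \<bar>B\<bar> * \<bar>P s' j\<bar>)" for j
    unfolding h_def
  proof (rule order_trans[OF sum_abs sum_mono])
    fix s' assume s': "s' \<in> Sing"
    have "\<bar>\<xi> (s', rp s')\<bar> \<le> \<bar>B\<bar>" using B[of "(s', rp s')"] s' Sing_sub rp_range[OF s'] by force
    then show "\<bar>\<xi> (s', rp s') * P s' j\<bar> \<le> \<bar>B\<bar> * \<bar>P s' j\<bar>"
      by (simp add: abs_mult mult_right_mono)
  qed
  define H where "H = Max ((\<lambda>j. \<Sum>s'\<in>Sing. \<bar>B\<bar> * \<bar>P s' j\<bar>) ` {1..k})"
  have hH: "\<bar>h j\<bar> \<le> H" if "j \<in> {1..k}" for j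
    using hb[of j] that unfolding H_def by (meson Max_ge finite_atLeastAtMost finite_imageI image_eqI order.trans)
  have lim0: "(\<lambda>n. \<Sum>j\<in>{1..k}. q j * (Rv^^n) h j) \<longlonglongrightarrow> 0"
  proof -
    have "(\<lambda>n. \<Sum>j\<in>{1..k}. q j * (Rv^^n) h j) \<longlonglongrightarrow> (\<Sum>j\<in>{1..k}. 0)"
    proof (rule tendsto_sum)
      fix j assume j: "j \<in> {1..k}"
      show "(\<lambda>n. q j * (Rv^^n) h j) \<longlonglongrightarrow> 0"
        by (rule tendsto_mult_right_zero, rule Rvn_tendsto[OF hH j])
    qed
    then show ?thesis by simp
  qed
  have Sa: "(\<lambda>n. \<Sum>m<n. Lterm \<xi> m) \<longlonglongrightarrow> Lf \<xi>"
    using Lterm_sums[OF B] by (simp add: sums_def)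
  then have "(\<lambda>n. \<Sum>m<Suc n. Lterm \<xi> m) \<longlonglongrightarrow> Lf \<xi>"
    by (rule LIMSEQ_Suc)
  then have "(\<lambda>n. \<Sum>m<n. Lterm (Qop k A P \<xi>) m) \<longlonglongrightarrow> Lf \<xi> - 0"
    unfolding part_eq by (intro tendsto_diff lim0)
  moreover have "(\<lambda>n. \<Sum>m<n. Lterm (Qop k A P \<xi>) m) \<longlonglongrightarrow> Lf (Qop k A P \<xi>)"
  proof -
    have QB: "\<And>x. x \<in> SP \<Longrightarrow> \<bar>Qop k A P \<xi> x\<bar> \<le> B"
      using Qop_bound[OF B] by auto
    show ?thesis using Lterm_sums[OF QB] unfolding sums_def .
  qed
  ultimately show ?thesis using LIMSEQ_unique by fastforce
qed

end


context MC
begin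

lemma space_SS: "space (state_space k) = SP"
  by (simp add: state_space_def space_pair_measure space_restrict_space)

lemma block_sets: "j \<in> {1..k} \<Longrightarrow> {j} \<times> {0..<pi} \<in> sets (state_space k)"
  unfolding state_space_def
  by (rule pair_measureI) (auto simp: sets_restrict_space)

lemma fst_meas: "(\<lambda>x. h (fst x) :: real) \<in> borel_measurable (state_space k)"
  unfolding state_space_def
  by (rule measurable_compose[OF measurable_fst]) simp

lemma Qop_meas:
  assumes \<phi>: "\<phi> \<in> borel_measurable (state_space k)"
  shows "Qop k A P \<phi> \<in> borel_measurable (state_space k)"
proof -
  have eq: "Qop k A P \<phi> = (\<lambda>x. \<Sum>i\<in>{1..k}. \<phi> (i, pact (A i) (snd x)) * P i (fst x))"
    by (auto simp: Qop_def fun_eq_iff)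
  have g: "(\<lambda>x. (i, pact (A i) (snd x))) \<in> state_space k \<rightarrow>\<^sub>M state_space k" if i: "i \<in> {1..k}" for i
    unfolding state_space_def
  proof (rule measurable_Pair)
    show "(\<lambda>x. i) \<in> count_space {1..k} \<Otimes>\<^sub>M restrict_space borel {0..<pi} \<rightarrow>\<^sub>M count_space {1..k}"
      using i by (intro measurable_const) auto
    show "(\<lambda>x. pact (A i) (snd x)) \<in> count_space {1..k} \<Otimes>\<^sub>M restrict_space borel {0..<pi} \<rightarrow>\<^sub>M restrict_space borel {0..<pi}"
      by (rule measurable_compose[OF measurable_snd pact_meas[OF i]])
  qed
  show ?thesis unfolding eq
  proof (rule borel_measurable_sum)
    fix i assume i: "i \<in> {1..k}"
    show "(\<lambda>x. \<phi> (i, pact (A i) (snd x)) * P i (fst x)) \<in> borel_measurable (state_space k)"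
      by (intro borel_measurable_times measurable_compose[OF g[OF i] \<phi>] fst_meas)
  qed
qed

lemma restr_meas:
  fixes \<phi> :: "nat \<times> real \<Rightarrow> real"
  assumes \<phi>: "\<phi> \<in> borel_measurable (state_space k)"
  shows "(\<lambda>x. if fst x \<in> Inv then \<phi> x else 0) \<in> borel_measurable (state_space k)"
proof -
  have "(\<lambda>x. if fst x \<in> Inv then \<phi> x else 0) = (\<lambda>x. (if fst x \<in> Inv then 1 else 0) * \<phi> x)"
    by auto
  then show ?thesis using fst_meas[of "\<lambda>j. if j \<in> Inv then 1 else 0"] \<phi>
    by (simp add: borel_measurable_times)
qed

lemma QI_meas: "\<phi> \<in> borel_measurable (state_space k) \<Longrightarrow> QI \<phi> \<in> borel_measurable (state_space k)"
  unfolding QI_as_Qop by (intro Qop_meas restr_meas)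

lemma QIn_meas: "\<phi> \<in> borel_measurable (state_space k) \<Longrightarrow> (QI^^n) \<phi> \<in> borel_measurable (state_space k)"
  by (induction n) (auto intro: QI_meas)

lemma QIn_bound': 
  assumes B: "\<And>x. x \<in> SP \<Longrightarrow> \<bar>\<phi> x\<bar> \<le> B"
  shows "x \<in> SP \<Longrightarrow> \<bar>(QI^^n) \<phi> x\<bar> \<le> \<bar>B\<bar>"
proof -
  assume x: "x \<in> SP"
  then obtain j t where jt: "x = (j, t)" "j \<in> {1..k}" "t \<in> {0..<pi}" by auto
  have "\<bar>(QI^^n) \<phi> x\<bar> \<le> B * u n j" using QIn_bound[OF B jt(2,3)] jt by simp
  also have "\<dots> \<le> \<bar>B\<bar>" using u_bounds[OF jt(2), of n]
    by (metis abs_ge_self abs_ge_zero mult_left_le order.trans mult_right_mono)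
  finally show ?thesis .
qed

lemma qh_lemma: "(\<Sum>j\<in>{1..k}. q j * (\<Sum>s\<in>Sing. \<xi> s * P s j)) = (\<Sum>s\<in>Sing. q s * \<xi> s)"
proof -
  have "(\<Sum>j\<in>{1..k}. q j * (\<Sum>s\<in>Sing. \<xi> s * P s j)) = (\<Sum>j\<in>{1..k}. \<Sum>s\<in>Sing. q j * (\<xi> s * P s j))"
    by (simp add: sum_distrib_left)
  also have "\<dots> = (\<Sum>s\<in>Sing. \<Sum>j\<in>{1..k}. q j * (\<xi> s * P s j))"
    by (rule sum.swap)
  also have "\<dots> = (\<Sum>s\<in>Sing. \<xi> s * (\<Sum>j\<in>{1..k}. P s j * q j))"
    by (simp add: sum_distrib_left algebra_simps)
  also have "\<dots> = (\<Sum>s\<in>Sing. \<xi> s * q s)"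
    using q_stat Sing_sub by (intro sum.cong) auto
  finally show ?thesis by (simp add: algebra_simps)
qed

lemma uniq_formula:
  assumes st: "stationary_prob k A P \<mu>"
    and \<phi>: "\<phi> \<in> borel_measurable (state_space k)"
    and B: "\<And>x. x \<in> SP \<Longrightarrow> \<bar>\<phi> x\<bar> \<le> B"
  shows "(\<integral>x. \<phi> x \<partial>\<mu>) = Lf \<phi>"
proof -
  have sets: "sets \<mu> = sets (state_space k)" and ps: "prob_space \<mu>"
    and stat: "stationary k A P \<mu>" using st by (auto simp: stationary_prob_def)
  interpret prob_space \<mu> by (rule ps)
  have spc: "space \<mu> = SP" using sets_eq_imp_space_eq[OF sets] space_SS by simp
  have meas_eq: "borel_measurable \<mu> = borel_measurable (state_space k)"
    by (rule measurable_cong_sets[OF sets refl])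
  have integ: "integrable \<mu> f" if "f \<in> borel_measurable (state_space k)" "\<And>x. x \<in> SP \<Longrightarrow> \<bar>f x\<bar> \<le> C" for f :: "nat \<times> real \<Rightarrow> real" and C :: real
    by (rule integrable_const_bound[where B=C]) (use that spc meas_eq in auto)
  have statI: "(\<integral>x. Qop k A P f x \<partial>\<mu>) = (\<integral>x. f x \<partial>\<mu>)"
    if "f \<in> borel_measurable (state_space k)" "\<And>x. x \<in> SP \<Longrightarrow> \<bar>f x\<bar> \<le> C" for f :: "nat \<times> real \<Rightarrow> real" and C :: real
    using stat that space_SS unfolding stationary_def by auto
  define \<nu> where "\<nu> j = measure \<mu> ({j} \<times> {0..<pi})" for j
  have int_fst: "(\<integral>x. h (fst x) \<partial>\<mu>) = (\<Sum>j\<in>{1..k}. h j * \<nu> j)" for h :: "nat \<Rightarrow> real"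
  proof -
    have "(\<integral>x. h (fst x) \<partial>\<mu>) = (\<integral>x. (\<Sum>j\<in>{1..k}. h j * indicator ({j} \<times> {0..<pi}) x) \<partial>\<mu>)"
    proof (rule Bochner_Integration.integral_cong[OF refl])
      fix x assume "x \<in> space \<mu>"
      then have x: "x \<in> SP" using spc by simp
      then have "(\<Sum>j\<in>{1..k}. h j * indicator ({j} \<times> {0..<pi}) x) = (\<Sum>j\<in>{1..k}. if j = fst x then h j else 0)"
        by (intro sum.cong refl) (cases x, auto simp: indicator_def)
      also have "\<dots> = h (fst x)" using x by (subst sum.delta) auto
      finally show "h (fst x) = (\<Sum>j\<in>{1..k}. h j * indicator ({j} \<times> {0..<pi}) x)" by simp
    qed
    also have "\<dots> = (\<Sum>j\<in>{1..k}. \<integral>x. h j * indicator ({j} \<times> {0..<pi}) x \<partial>\<mu>)"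
    proof (rule Bochner_Integration.integral_sum)
      fix j assume j: "j \<in> {1..k}"
      have "{j} \<times> {0..<pi} \<in> sets \<mu>" using block_sets[OF j] sets by simp
      then show "integrable \<mu> (\<lambda>x. h j * indicator ({j} \<times> {0..<pi}) x)"
        by (intro integrable_mult_right integrable_real_indicator) (auto simp: less_top[symmetric])
    qed
    also have "\<dots> = (\<Sum>j\<in>{1..k}. h j * \<nu> j)"
    proof (rule sum.cong[OF refl])
      fix j assume j: "j \<in> {1..k}"
      have "{j} \<times> {0..<pi} \<subseteq> space \<mu>" using j spc by auto
      then show "(\<integral>x. h j * indicator ({j} \<times> {0..<pi}) x \<partial>\<mu>) = h j * \<nu> j"
        by (simp add: \<nu>_def Int_absorb2)
    qed
    finally show ?thesis .
  qed
  have \<nu>q: "\<forall>j\<in>{1..k}. \<nu> j = q j"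
  proof (rule stat_unique)
    show "0 \<le> \<nu> j" for j by (simp add: \<nu>_def)
    show "(\<Sum>j\<in>{1..k}. \<nu> j) = 1"
      using int_fst[of "\<lambda>_. 1"] prob_space by simp
    fix i assume i: "i \<in> {1..k}"
    define e where "e j = (if j = i then 1 else 0::real)" for j
    have "Qop k A P (\<lambda>x. e (fst x)) = (\<lambda>x. P i (fst x))"
    proof
      fix x :: "nat \<times> real"
      obtain j t where x: "x = (j, t)" by (cases x)
      have "Qop k A P (\<lambda>x. e (fst x)) x = (\<Sum>l\<in>{1..k}. e l * P l j)"
        unfolding x Qop_def by simp
      also have "\<dots> = (\<Sum>l\<in>{1..k}. if l = i then P l j else 0)"
        unfolding e_def by (rule sum.cong) auto
      also have "\<dots> = P i j" using i by (simp add: sum.delta')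
      finally show "Qop k A P (\<lambda>x. e (fst x)) x = P i (fst x)" by (simp add: x)
    qed
    moreover have "(\<integral>x. Qop k A P (\<lambda>x. e (fst x)) x \<partial>\<mu>) = (\<integral>x. e (fst x) \<partial>\<mu>)"
      by (rule statI[of "\<lambda>x. e (fst x)" 1]) (rule fst_meas, simp add: e_def)
    moreover have "(\<integral>x. e (fst x) \<partial>\<mu>) = \<nu> i"
    proof -
      have "(\<integral>x. e (fst x) \<partial>\<mu>) = (\<Sum>j\<in>{1..k}. e j * \<nu> j)" by (rule int_fst)
      also have "\<dots> = (\<Sum>j\<in>{1..k}. if j = i then \<nu> j else 0)"
        unfolding e_def by (rule sum.cong) auto
      also have "\<dots> = \<nu> i" using i by (subst sum.delta) auto
      finally show ?thesis .
    qed
    ultimately show "(\<Sum>j\<in>{1..k}. P i j * \<nu> j) = \<nu> i"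
      by (simp add: int_fst)
  qed
  have step: "(\<integral>x. (QI^^n) \<phi> x \<partial>\<mu>) = Lterm \<phi> n + (\<integral>x. (QI^^Suc n) \<phi> x \<partial>\<mu>)" for n
  proof -
    define \<psi> where "\<psi> = (QI^^n) \<phi>"
    have \<psi>m: "\<psi> \<in> borel_measurable (state_space k)" unfolding \<psi>_def by (rule QIn_meas[OF \<phi>])
    have \<psi>b: "\<And>x. x \<in> SP \<Longrightarrow> \<bar>\<psi> x\<bar> \<le> \<bar>B\<bar>" unfolding \<psi>_def by (rule QIn_bound'[OF B])
    define h where "h j = (\<Sum>s\<in>Sing. \<psi> (s, rp s) * P s j)" for j
    have QSh: "QS \<psi> = (\<lambda>x. h (fst x))" by (auto simp: QS_def h_def fun_eq_iff)
    have "(\<integral>x. \<psi> x \<partial>\<mu>) = (\<integral>x. Qop k A P \<psi> x \<partial>\<mu>)"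
      by (rule statI[OF \<psi>m \<psi>b, symmetric])
    also have "\<dots> = (\<integral>x. QI \<psi> x + h (fst x) \<partial>\<mu>)"
      by (simp add: Qop_split QSh)
    also have "\<dots> = (\<integral>x. QI \<psi> x \<partial>\<mu>) + (\<integral>x. h (fst x) \<partial>\<mu>)"
    proof (rule Bochner_Integration.integral_add)
      show "integrable \<mu> (QI \<psi>)"
        using integ[of "QI \<psi>" "\<bar>B\<bar>"] QI_meas[OF \<psi>m] QIn_bound'[OF \<psi>b, where n=1] by simp
      have "\<And>x. x \<in> SP \<Longrightarrow> \<bar>h (fst x)\<bar> \<le> \<bar>Qop k A P \<psi> x\<bar> + \<bar>QI \<psi> x\<bar>"
        by (metis Qop_split QSh abs_triangle_ineq4 add_diff_cancel_left')
      moreover have "\<And>x. x \<in> SP \<Longrightarrow> \<bar>Qop k A P \<psi> x\<bar> \<le> \<bar>B\<bar>"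
        using Qop_bound[OF \<psi>b] by auto
      moreover have "\<And>x. x \<in> SP \<Longrightarrow> \<bar>QI \<psi> x\<bar> \<le> \<bar>B\<bar>"
        using QIn_bound'[OF \<psi>b, where n=1] by simp
      ultimately have "\<And>x. x \<in> SP \<Longrightarrow> \<bar>h (fst x)\<bar> \<le> \<bar>B\<bar> + \<bar>B\<bar>" by fastforce
      then show "integrable \<mu> (\<lambda>x. h (fst x))"
        using integ[of "\<lambda>x. h (fst x)" "\<bar>B\<bar> + \<bar>B\<bar>"] fst_meas by simp
    qed
    also have "(\<integral>x. h (fst x) \<partial>\<mu>) = Lterm \<phi> n"
    proof -
      have "(\<integral>x. h (fst x) \<partial>\<mu>) = (\<Sum>j\<in>{1..k}. q j * h j)"
        using \<nu>q by (simp add: int_fst algebra_simps)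
      also have "\<dots> = (\<Sum>s\<in>Sing. q s * \<psi> (s, rp s))"
        unfolding h_def by (rule qh_lemma)
      finally show ?thesis by (simp add: Lterm_def \<psi>_def)
    qed
    finally show ?thesis by (simp add: \<psi>_def)
  qed
  have rec: "(\<integral>x. \<phi> x \<partial>\<mu>) = (\<Sum>m<n. Lterm \<phi> m) + (\<integral>x. (QI^^n) \<phi> x \<partial>\<mu>)" for n
  proof (induction n)
    case 0 then show ?case by simp
  next
    case (Suc n) then show ?case using step[of n] by simp
  qed
  obtain \<beta> where \<beta>: "summable \<beta>" "\<forall>n. 0 \<le> \<beta> n" "\<forall>n. \<forall>j\<in>{1..k}. u n j \<le> \<beta> n"
    using u_decay by blast
  have b0: "\<beta> \<longlonglongrightarrow> 0" using \<beta>(1) by (rule summable_LIMSEQ_zero)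
  have rem: "(\<lambda>n. \<integral>x. (QI^^n) \<phi> x \<partial>\<mu>) \<longlonglongrightarrow> 0"
  proof (rule Lim_null_comparison[OF always_eventually[OF allI]])
    fix n
    have bnd: "\<And>x. x \<in> SP \<Longrightarrow> \<bar>(QI^^n) \<phi> x\<bar> \<le> \<bar>B\<bar> * \<beta> n"
    proof -
      fix x assume "x \<in> SP"
      then obtain j t where jt: "x = (j, t)" "j \<in> {1..k}" "t \<in> {0..<pi}" by auto
      have "\<bar>(QI^^n) \<phi> x\<bar> \<le> B * u n j" using QIn_bound[OF B jt(2,3)] jt by simp
      also have "\<dots> \<le> \<bar>B\<bar> * \<beta> n"
        using \<beta> jt u_bounds[OF jt(2), of n] by (meson abs_ge_self abs_ge_zero mult_mono order.trans)
      finally show "\<bar>(QI^^n) \<phi> x\<bar> \<le> \<bar>B\<bar> * \<beta> n" .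
    qed
    have "norm (\<integral>x. (QI^^n) \<phi> x \<partial>\<mu>) \<le> (\<integral>x. norm ((QI^^n) \<phi> x) \<partial>\<mu>)"
      by (rule integral_norm_bound)
    also have "\<dots> \<le> (\<integral>x. \<bar>B\<bar> * \<beta> n \<partial>\<mu>)"
    proof (rule Bochner_Integration.integral_mono)
      show "integrable \<mu> (\<lambda>x. norm ((QI^^n) \<phi> x))"
        using integ[of "(QI^^n) \<phi>" "\<bar>B\<bar>"] QIn_meas[OF \<phi>] QIn_bound'[OF B] by simp
    qed (use bnd spc in auto)
    also have "\<dots> = \<bar>B\<bar> * \<beta> n" using prob_space by simp
    finally show "norm (\<integral>x. (QI^^n) \<phi> x \<partial>\<mu>) \<le> \<bar>B\<bar> * \<beta> n" .
  next
    show "(\<lambda>n. \<bar>B\<bar> * \<beta> n) \<longlonglongrightarrow> 0" using tendsto_mult_right_zero[OF b0] by simp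
  qed
  have "(\<lambda>n. \<Sum>m<n. Lterm \<phi> m) \<longlonglongrightarrow> (\<integral>x. \<phi> x \<partial>\<mu>) - 0"
  proof -
    have eqn: "(\<lambda>n. \<Sum>m<n. Lterm \<phi> m) = (\<lambda>n. (\<integral>x. \<phi> x \<partial>\<mu>) - (\<integral>x. (QI^^n) \<phi> x \<partial>\<mu>))"
      proof (rule ext) fix n show "(\<Sum>m<n. Lterm \<phi> m) = (\<integral>x. \<phi> x \<partial>\<mu>) - (\<integral>x. (QI^^n) \<phi> x \<partial>\<mu>)" using rec[of n] by linarith qed
    show ?thesis unfolding eqn by (rule tendsto_diff[OF tendsto_const rem])
  qed
  then have "Lterm \<phi> sums (\<integral>x. \<phi> x \<partial>\<mu>)" by (simp add: sums_def)
  then show ?thesis unfolding Lf_def by (simp add: sums_unique)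
qed

end


lemma wprob_single[simp]: "wprob P [j] = 1"
  by (simp add: wprob_def)

lemma wprob_cons2: "wprob P (j # i # ys) = P i j * wprob P (i # ys)"
proof -
  have "wprob P (j # i # ys) = (\<Prod>l\<in>{1..<Suc (Suc (length ys))}. P ((j # i # ys) ! l) ((j # i # ys) ! (l - 1)))"
    by (simp add: wprob_def)
  also have "\<dots> = P i j * (\<Prod>l\<in>{Suc 1..<Suc (Suc (length ys))}. P ((j # i # ys) ! l) ((j # i # ys) ! (l - 1)))"
    by (subst prod.atLeast_Suc_lessThan) auto
  also have "(\<Prod>l\<in>{Suc 1..<Suc (Suc (length ys))}. P ((j # i # ys) ! l) ((j # i # ys) ! (l - 1)))
      = (\<Prod>l\<in>{1..<Suc (length ys)}. P ((j # i # ys) ! Suc l) ((j # i # ys) ! (Suc l - 1)))"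
    by (rule prod.shift_bounds_Suc_ivl)
  also have "\<dots> = (\<Prod>l\<in>{1..<Suc (length ys)}. P ((i # ys) ! l) ((i # ys) ! (l - 1)))"
    by (intro prod.cong refl) (auto simp: nth_Cons split: nat.splits)
  also have "\<dots> = wprob P (i # ys)" by (simp add: wprob_def)
  finally show ?thesis .
qed

context MC
begin

primrec Xs :: "nat \<Rightarrow> nat list set" where
  "Xs 0 = (\<lambda>j. [j]) ` {1..k}"
| "Xs (Suc m) = (\<lambda>(i, ys). i # ys) ` (Inv \<times> Xs m)"

lemma Xs_finite: "finite (Xs m)"
  by (induction m) auto

lemma Xs_char: "xs \<in> Xs m \<longleftrightarrow> length xs = Suc m \<and> last xs \<in> {1..k} \<and> (\<forall>l<m. xs ! l \<in> Inv)"
proof (induction m arbitrary: xs)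
  case 0
  show ?case
  proof
    assume "xs \<in> Xs 0" then show "length xs = Suc 0 \<and> last xs \<in> {1..k} \<and> (\<forall>l<0. xs ! l \<in> Inv)" by auto
  next
    assume "length xs = Suc 0 \<and> last xs \<in> {1..k} \<and> (\<forall>l<0. xs ! l \<in> Inv)"
    then obtain j where "xs = [j]" "j \<in> {1..k}" by (cases xs) auto
    then show "xs \<in> Xs 0" by auto
  qed
next
  case (Suc m)
  show ?case
  proof
    assume "xs \<in> Xs (Suc m)"
    then obtain i ys where xs: "xs = i # ys" "i \<in> Inv" "ys \<in> Xs m" by auto
    then have ys: "length ys = Suc m" "last ys \<in> {1..k}" "\<forall>l<m. ys ! l \<in> Inv" using Suc by auto
    have "\<forall>l<Suc m. xs ! l \<in> Inv"
    proof (intro allI impI)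
      fix l assume "l < Suc m"
      then show "xs ! l \<in> Inv" using xs ys by (cases l) auto
    qed
    then show "length xs = Suc (Suc m) \<and> last xs \<in> {1..k} \<and> (\<forall>l<Suc m. xs ! l \<in> Inv)"
      using xs ys by auto
  next
    assume a: "length xs = Suc (Suc m) \<and> last xs \<in> {1..k} \<and> (\<forall>l<Suc m. xs ! l \<in> Inv)"
    then obtain i ys where xs: "xs = i # ys" by (cases xs) auto
    have "i \<in> Inv" using a xs by force
    moreover have "ys \<in> Xs m"
    proof -
      have "length ys = Suc m" using a xs by simp
      moreover have "last ys \<in> {1..k}" using a xs by (cases ys) auto
      moreover have "\<forall>l<m. ys ! l \<in> Inv"
      proof (intro allI impI)
        fix l assume "l < m"
        then have "xs ! Suc l \<in> Inv" using a by auto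
        then show "ys ! l \<in> Inv" using xs by simp
      qed
      ultimately show ?thesis using Suc by simp
    qed
    ultimately show "xs \<in> Xs (Suc m)" using xs by force
  qed
qed

lemma Xs_ne: "xs \<in> Xs m \<Longrightarrow> xs \<noteq> []"
  using Xs_char by fastforce

lemma Xs_set: "xs \<in> Xs m \<Longrightarrow> set xs \<subseteq> {1..k}"
proof (induction m arbitrary: xs)
  case 0 then show ?case by auto
next
  case (Suc m) then show ?case using Inv_sub by force
qed

definition W :: "nat list set" where "W = words k Sing Inv"
definition gw :: "nat list \<Rightarrow> real" where "gw w = q (hd w) * wprob P w"
definition Fw :: "nat list \<Rightarrow> nat \<times> real" where "Fw w = (last w, wpoint A w)"
definition Wm :: "nat \<Rightarrow> nat list set" where "Wm m = (\<lambda>(s, xs). s # xs) ` (Sing \<times> Xs m)"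

lemma Wm_finite: "finite (Wm m)"
  unfolding Wm_def using Xs_finite by auto

lemma Wm_len: "w \<in> Wm m \<Longrightarrow> length w = Suc (Suc m)"
  unfolding Wm_def using Xs_char by auto

lemma W_eq: "W = (\<Union>m. Wm m)"
proof
  show "W \<subseteq> (\<Union>m. Wm m)"
  proof
    fix w assume "w \<in> W"
    then have w: "2 \<le> length w" "hd w \<in> Sing" "last w \<in> {1..k}"
      "\<forall>l. 0 < l \<and> l < length w - 1 \<longrightarrow> w ! l \<in> Inv"
      unfolding W_def words_def by auto
    then obtain s xs where sxs: "w = s # xs" by (cases w) auto
    then have xsne: "xs \<noteq> []" using w by auto
    define m where "m = length xs - 1"
    have "xs \<in> Xs m"
      unfolding Xs_char
    proof (intro conjI allI impI)
      show "length xs = Suc m" using xsne by (simp add: m_def)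
      show "last xs \<in> {1..k}" using w sxs xsne by simp
      fix l assume "l < m"
      then have "0 < Suc l \<and> Suc l < length w - 1" using sxs m_def xsne by auto
      then have "w ! Suc l \<in> Inv" using w(4) by blast
      then show "xs ! l \<in> Inv" using sxs by simp
    qed
    then have "w \<in> Wm m" unfolding Wm_def using sxs w by auto
    then show "w \<in> (\<Union>m. Wm m)" by blast
  qed
  show "(\<Union>m. Wm m) \<subseteq> W"
  proof
    fix w assume "w \<in> (\<Union>m. Wm m)"
    then obtain m s xs where w: "w = s # xs" "s \<in> Sing" "xs \<in> Xs m" unfolding Wm_def by auto
    then have xs: "length xs = Suc m" "last xs \<in> {1..k}" "\<forall>l<m. xs ! l \<in> Inv" using Xs_char by auto
    have "\<forall>l. 0 < l \<and> l < length w - 1 \<longrightarrow> w ! l \<in> Inv"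
    proof (intro allI impI)
      fix l assume l: "0 < l \<and> l < length w - 1"
      then obtain l' where "l = Suc l'" by (cases l) auto
      then show "w ! l \<in> Inv" using l xs w by auto
    qed
    then show "w \<in> W" unfolding W_def words_def using w xs by auto
  qed
qed

lemma W_set: "w \<in> W \<Longrightarrow> set w \<subseteq> {1..k}"
proof -
  assume "w \<in> W"
  then obtain m s xs where sxs: "w = s # xs" "s \<in> Sing" "xs \<in> Xs m" using W_eq unfolding Wm_def by auto
  then have "s \<in> {1..k}" using Sing_sub by auto
  then show ?thesis using sxs Xs_set[OF sxs(3)] by simp
qed

lemma gw_nonneg: "w \<in> W \<Longrightarrow> 0 \<le> gw w"
proof -
  assume w: "w \<in> W"
  then have "hd w \<in> Sing" unfolding W_def words_def by auto
  then have "0 \<le> q (hd w)" using q_prob Sing_sub by auto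
  moreover have "0 \<le> wprob P w"
    unfolding wprob_def
  proof (rule prod_nonneg)
    fix l assume l: "l \<in> {1..<length w}"
    then have "w ! l \<in> {1..k}" "w ! (l - 1) \<in> {1..k}" using W_set[OF w] nth_mem by force+
    then show "0 \<le> P (w ! l) (w ! (l - 1))" by (rule P_nonneg)
  qed
  ultimately show ?thesis by (simp add: gw_def)
qed

lemma Fw_SP: "w \<in> W \<Longrightarrow> Fw w \<in> SP"
proof -
  assume w: "w \<in> W"
  then obtain m s xs where sxs: "w = s # xs" "s \<in> Sing" "xs \<in> Xs m" using W_eq unfolding Wm_def by auto
  then have xsne: "xs \<noteq> []" using Xs_ne by auto
  then obtain ys y where ys: "xs = ys @ [y]" by (metis rev_exhaust)
  have yK: "y \<in> {1..k}" using Xs_set[OF sxs(3)] ys by auto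
  have "wpoint A w = pact (A y) (foldl (\<lambda>t i. pact (A i) t) (range_pt (A s)) ys)"
    using sxs ys by (simp add: wpoint_def)
  then have "wpoint A w \<in> {0..<pi}" using pact_range[OF yK] by simp
  moreover have "last w \<in> {1..k}" using w unfolding W_def words_def by auto
  ultimately show ?thesis by (simp add: Fw_def)
qed

lemma Xs_sum: "(\<Sum>xs\<in>Xs m. wprob P (j # xs) * \<phi> (last xs, foldl (\<lambda>t i. pact (A i) t) t xs))
   = (QI^^m) (Qop k A P \<phi>) (j, t)"
proof (induction m arbitrary: j t)
  case 0
  have "(\<Sum>xs\<in>Xs 0. wprob P (j # xs) * \<phi> (last xs, foldl (\<lambda>t i. pact (A i) t) t xs))
      = (\<Sum>i\<in>{1..k}. wprob P [j, i] * \<phi> (i, pact (A i) t))"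
    by (simp add: sum.reindex inj_on_def)
  also have "\<dots> = Qop k A P \<phi> (j, t)"
    by (simp add: Qop_def wprob_cons2 algebra_simps)
  finally show ?case by simp
next
  case (Suc m)
  have inj: "inj_on (\<lambda>(i, ys). i # ys) (Inv \<times> Xs m)" by (auto simp: inj_on_def)
  define F where "F xs = wprob P (j # xs) * \<phi> (last xs, foldl (\<lambda>t i. pact (A i) t) t xs)" for xs
  have "(\<Sum>xs\<in>Xs (Suc m). F xs) = sum (F \<circ> (\<lambda>(i, ys). i # ys)) (Inv \<times> Xs m)"
    by (simp only: Xs.simps sum.reindex[OF inj])
  also have "\<dots> = (\<Sum>(i, ys)\<in>Inv \<times> Xs m. P i j * (wprob P (i # ys) * \<phi> (last ys, foldl (\<lambda>t i. pact (A i) t) (pact (A i) t) ys)))"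
    by (rule sum.cong) (auto simp: F_def wprob_cons2 Xs_ne)
  also have "\<dots> = (\<Sum>i\<in>Inv. \<Sum>ys\<in>Xs m. P i j * (wprob P (i # ys) * \<phi> (last ys, foldl (\<lambda>t i. pact (A i) t) (pact (A i) t) ys)))"
    by (rule sum.cartesian_product[symmetric])
  finally have eq: "(\<Sum>xs\<in>Xs (Suc m). F xs) = \<dots>" .
  have "(\<Sum>xs\<in>Xs (Suc m). wprob P (j # xs) * \<phi> (last xs, foldl (\<lambda>t i. pact (A i) t) t xs))
     = (\<Sum>i\<in>Inv. \<Sum>ys\<in>Xs m. P i j * (wprob P (i # ys) * \<phi> (last ys, foldl (\<lambda>t i. pact (A i) t) (pact (A i) t) ys)))"
    using eq by (simp add: F_def)
  also have "\<dots> = (\<Sum>i\<in>Inv. P i j * (QI^^m) (Qop k A P \<phi>) (i, pact (A i) t))"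
    by (simp add: sum_distrib_left[symmetric] Suc)
  also have "\<dots> = (QI^^Suc m) (Qop k A P \<phi>) (j, t)"
    by (simp add: QI_def algebra_simps)
  finally show ?case .
qed

lemma Wm_sum: "(\<Sum>w\<in>Wm m. gw w * \<phi> (Fw w)) = Lterm (Qop k A P \<phi>) m"
proof -
  have inj: "inj_on (\<lambda>(s, xs). s # xs) (Sing \<times> Xs m)" by (auto simp: inj_on_def)
  have "(\<Sum>w\<in>Wm m. gw w * \<phi> (Fw w))
     = (\<Sum>(s, xs)\<in>Sing \<times> Xs m. q s * (wprob P (s # xs) * \<phi> (last xs, foldl (\<lambda>t i. pact (A i) t) (rp s) xs)))"
    unfolding Wm_def by (subst sum.reindex[OF inj])
       (auto simp: gw_def Fw_def wpoint_def rp_def Xs_ne case_prod_unfold intro!: sum.cong)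
  also have "\<dots> = (\<Sum>s\<in>Sing. q s * (\<Sum>xs\<in>Xs m. wprob P (s # xs) * \<phi> (last xs, foldl (\<lambda>t i. pact (A i) t) (rp s) xs)))"
    by (subst sum.cartesian_product[symmetric]) (simp add: sum_distrib_left)
  also have "\<dots> = Lterm (Qop k A P \<phi>) m"
    by (simp add: Xs_sum Lterm_def)
  finally show ?thesis .
qed

end


context MC
begin

lemma Rvn_cong: "(\<And>i. i \<in> {1..k} \<Longrightarrow> f i = g i) \<Longrightarrow> j \<in> {1..k} \<Longrightarrow> (Rv^^n) f j = (Rv^^n) g j"
  by (metis Rvn_mono order_antisym order_refl)

lemma Lterm_one: "Lterm (Qop k A P (\<lambda>_. 1)) m = (\<Sum>s\<in>Sing. q s * u m s)"
proof -
  define c where "c j = (\<Sum>i\<in>{1..k}. P i j)" for j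
  have "Qop k A P (\<lambda>_. 1) = (\<lambda>x. c (fst x))" by (auto simp: Qop_def c_def fun_eq_iff)
  then have "(QI^^m) (Qop k A P (\<lambda>_. 1)) = (\<lambda>x. (Rv^^m) c (fst x))" by (simp add: QIn_fst)
  moreover have "(Rv^^m) c s = u m s" if "s \<in> Sing" for s
    unfolding u_def using that Sing_sub P_colsum by (intro Rvn_cong) (auto simp: c_def)
  ultimately show ?thesis by (simp add: Lterm_def)
qed

lemma Lterm_one_nonneg: "0 \<le> Lterm (Qop k A P (\<lambda>_. 1)) m"
  unfolding Lterm_one using q_prob u_bounds Sing_sub
  by (intro sum_nonneg mult_nonneg_nonneg) auto

lemma Lterm_one_sums: "Lterm (Qop k A P (\<lambda>_. 1)) sums 1"
proof -
  have eq: "(\<Sum>m<n. Lterm (Qop k A P (\<lambda>_. 1)) m) = 1 - (\<Sum>j\<in>{1..k}. q j * u n j)" for n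
    using kac[where n=n and h="\<lambda>_. 1"] q_prob by (simp add: Lterm_one u_def)
  have "(\<lambda>n. \<Sum>j\<in>{1..k}. q j * u n j) \<longlonglongrightarrow> (\<Sum>j\<in>{1..k}. 0)"
  proof (rule tendsto_sum)
    fix j assume j: "j \<in> {1..k}"
    have "(\<lambda>n. (Rv^^n) (\<lambda>_. 1) j) \<longlonglongrightarrow> 0" by (rule Rvn_tendsto[where H=1]) (use j in auto)
    then show "(\<lambda>n. q j * u n j) \<longlonglongrightarrow> 0" unfolding u_def by (rule tendsto_mult_right_zero)
  qed
  then have "(\<lambda>n. 1 - (\<Sum>j\<in>{1..k}. q j * u n j)) \<longlonglongrightarrow> 1 - 0"
    by (intro tendsto_diff tendsto_const) simp
  then show ?thesis unfolding sums_def eq by simp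
qed

lemma gw_summable: "gw summable_on W"
proof (rule nonneg_bdd_above_summable_on)
  show "\<And>x. x \<in> W \<Longrightarrow> 0 \<le> gw x" by (rule gw_nonneg)
  show "bdd_above (sum gw ` {F. F \<subseteq> W \<and> finite F})"
  proof (rule bdd_aboveI2)
    fix F assume F: "F \<in> {F. F \<subseteq> W \<and> finite F}"
    define N where "N = Suc (Max (insert 0 (length ` F)))"
    have sub: "F \<subseteq> (\<Union>m\<in>{..<N}. Wm m)"
    proof
      fix w assume w: "w \<in> F"
      then obtain m where m: "w \<in> Wm m" using F W_eq by auto
      have "length w \<le> Max (insert 0 (length ` F))" using F w by (intro Max_ge) auto
      then have "m < N" using Wm_len[OF m] by (simp add: N_def)
      then show "w \<in> (\<Union>m\<in>{..<N}. Wm m)" using m by blast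
    qed
    have disj: "\<forall>i\<in>{..<N}. \<forall>j\<in>{..<N}. i \<noteq> j \<longrightarrow> Wm i \<inter> Wm j = {}"
    proof (intro ballI impI)
      fix i j :: nat assume ij: "i \<noteq> j"
      show "Wm i \<inter> Wm j = {}"
      proof (rule ccontr)
        assume "Wm i \<inter> Wm j \<noteq> {}"
        then obtain w where "w \<in> Wm i" "w \<in> Wm j" by blast
        then have "Suc (Suc i) = Suc (Suc j)" using Wm_len by metis
        then show False using ij by simp
      qed
    qed
    have "sum gw F \<le> sum gw (\<Union>m\<in>{..<N}. Wm m)"
    proof (rule sum_mono2)
      show "finite (\<Union>m\<in>{..<N}. Wm m)" using Wm_finite by auto
      show "F \<subseteq> (\<Union>m\<in>{..<N}. Wm m)" by (rule sub)
      show "\<And>b. b \<in> (\<Union>m\<in>{..<N}. Wm m) - F \<Longrightarrow> 0 \<le> gw b"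
        using gw_nonneg W_eq by auto
    qed
    also have "\<dots> = (\<Sum>m<N. sum gw (Wm m))"
      using disj Wm_finite by (subst sum.UNION_disjoint) auto
    also have "\<dots> = (\<Sum>m<N. Lterm (Qop k A P (\<lambda>_. 1)) m)"
      using Wm_sum[where \<phi>="\<lambda>_. 1"] by simp
    also have "\<dots> \<le> 1"
      using sum_le_suminf[OF sums_summable[OF Lterm_one_sums], of "{..<N}"] Lterm_one_nonneg
            sums_unique[OF Lterm_one_sums] by simp
    finally show "sum gw F \<le> 1" .
  qed
qed

lemma G_norm_summable:
  assumes B: "\<And>x. x \<in> SP \<Longrightarrow> \<bar>\<phi> x\<bar> \<le> B"
  shows "(\<lambda>w. norm (gw w * \<phi> (Fw w))) summable_on W"
proof (rule summable_on_comparison_test)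
  show "(\<lambda>w. gw w * \<bar>B\<bar>) summable_on W" by (rule summable_on_cmult_left[OF gw_summable])
  fix w assume w: "w \<in> W"
  show "0 \<le> norm (gw w * \<phi> (Fw w))" by simp
  have "\<bar>\<phi> (Fw w)\<bar> \<le> \<bar>B\<bar>" using B[OF Fw_SP[OF w]] by simp
  then show "norm (gw w * \<phi> (Fw w)) \<le> gw w * \<bar>B\<bar>"
    using gw_nonneg[OF w] by (simp add: abs_mult mult_left_mono)
qed

lemma eta_sum:
  assumes B: "\<And>x. x \<in> SP \<Longrightarrow> \<bar>\<phi> x\<bar> \<le> B"
  shows "integrable (count_space W) (\<lambda>w. gw w * \<phi> (Fw w))"
    and "integral\<^sup>L (count_space W) (\<lambda>w. gw w * \<phi> (Fw w)) = Lf (Qop k A P \<phi>)"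
proof -
  define G where "G w = gw w * \<phi> (Fw w)" for w
  have ns: "(\<lambda>w. norm (G w)) summable_on W" unfolding G_def by (rule G_norm_summable[OF B])
  have old: "Infinite_Set_Sum.abs_summable_on G W"
    using ns abs_summable_equivalent by blast
  show "integrable (count_space W) (\<lambda>w. gw w * \<phi> (Fw w))"
    using old unfolding abs_summable_on_def G_def .
  have gs: "G summable_on W" using abs_summable_summable[OF ns] .
  define S where "S = infsum G W"
  have hs: "(G has_sum S) W" unfolding S_def using gs by simp
  have Weq: "W = snd ` (SIGMA m:UNIV. Wm m)" using W_eq by force
  have inj: "inj_on snd (SIGMA m:UNIV. Wm m)"
    by (auto simp: inj_on_def) (metis Wm_len Suc_inject)
  have "(G \<circ> snd has_sum S) (SIGMA m:UNIV. Wm m)"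
    using hs unfolding Weq by (subst (asm) has_sum_reindex[OF inj])
  then have "((\<lambda>m. sum G (Wm m)) has_sum S) UNIV"
    by (rule has_sum_SigmaD) (simp add: Wm_finite)
  then have "(\<lambda>m. sum G (Wm m)) sums S" by (rule has_sum_imp_sums)
  moreover have "(\<lambda>m. sum G (Wm m)) = Lterm (Qop k A P \<phi>)"
    by (simp add: G_def Wm_sum fun_eq_iff)
  ultimately have "S = Lf (Qop k A P \<phi>)" by (simp add: Lf_def sums_unique)
  moreover have "integral\<^sup>L (count_space W) G = S"
    unfolding S_def using infsetsum_infsum[OF old] by (simp add: infsetsum_def)
  moreover have "G = (\<lambda>w. gw w * \<phi> (Fw w))" by (rule ext) (simp add: G_def)
  ultimately show "integral\<^sup>L (count_space W) (\<lambda>w. gw w * \<phi> (Fw w)) = Lf (Qop k A P \<phi>)"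
    by simp
qed

abbreviation eta0 where "eta0 \<equiv> eta k Sing Inv A P q"

lemma eta_eq: "eta0 = distr (density (count_space W) (\<lambda>w. ennreal (gw w))) (state_space k) Fw"
  by (simp add: eta_def W_def gw_def Fw_def[abs_def])

lemma Fw_meas: "Fw \<in> count_space W \<rightarrow>\<^sub>M state_space k"
  using Fw_SP space_SS by auto

lemma Fw_meas_dens: "Fw \<in> density (count_space W) (\<lambda>w. ennreal (gw w)) \<rightarrow>\<^sub>M state_space k"
  using Fw_meas measurable_cong_sets[OF sets_density[of "count_space W" "\<lambda>w. ennreal (gw w)"] refl, of "state_space k"]
  by blast

lemma sets_eta: "sets eta0 = sets (state_space k)"
  by (simp add: eta_eq)

lemma eta_int:
  assumes \<phi>: "\<phi> \<in> borel_measurable (state_space k)" and B: "\<And>x. x \<in> SP \<Longrightarrow> \<bar>\<phi> x\<bar> \<le> B"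
  shows "(\<integral>x. \<phi> x \<partial>eta0) = Lf (Qop k A P \<phi>)"
proof -
  have "(\<integral>x. \<phi> x \<partial>eta0) = (\<integral>w. \<phi> (Fw w) \<partial>density (count_space W) (\<lambda>w. ennreal (gw w)))"
    unfolding eta_eq by (rule integral_distr[OF Fw_meas_dens \<phi>])
  also have "\<dots> = (\<integral>w. gw w *\<^sub>R \<phi> (Fw w) \<partial>count_space W)"
    by (subst integral_density) (auto simp: AE_count_space gw_nonneg)
  also have "\<dots> = Lf (Qop k A P \<phi>)" using eta_sum(2)[OF B] by simp
  finally show ?thesis .
qed

lemma eta_prob: "prob_space eta0"
proof (rule prob_spaceI)
  have int1: "integrable (count_space W) gw" and i1: "integral\<^sup>L (count_space W) gw = 1"
  proof -
    have B1: "\<And>x. x \<in> SP \<Longrightarrow> \<bar>(\<lambda>_. 1::real) x\<bar> \<le> 1" by simp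
    show "integrable (count_space W) gw" using eta_sum(1)[OF B1] by simp
    have "integral\<^sup>L (count_space W) gw = Lf (Qop k A P (\<lambda>_. 1))" using eta_sum(2)[OF B1] by simp
    also have "\<dots> = 1" unfolding Lf_def by (rule sums_unique[OF Lterm_one_sums, symmetric])
    finally show "integral\<^sup>L (count_space W) gw = 1" .
  qed
  have sp: "space eta0 = space (state_space k)" by (simp add: eta_eq)
  have "emeasure eta0 (space eta0) = emeasure (density (count_space W) (\<lambda>w. ennreal (gw w)))
      (Fw -` space (state_space k) \<inter> space (density (count_space W) (\<lambda>w. ennreal (gw w))))"
    unfolding sp unfolding eta_eq by (rule emeasure_distr[OF Fw_meas_dens sets.top])
  also have "Fw -` space (state_space k) \<inter> space (density (count_space W) (\<lambda>w. ennreal (gw w))) = W"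
    using Fw_SP space_SS by auto
  finally have "emeasure eta0 (space eta0) = emeasure (density (count_space W) (\<lambda>w. ennreal (gw w))) W" .
  also have "\<dots> = (\<integral>\<^sup>+ w. ennreal (gw w) \<partial>count_space W)"
    by (subst emeasure_density) (auto intro!: nn_integral_cong simp: indicator_def)
  also have "\<dots> = ennreal (integral\<^sup>L (count_space W) gw)"
    by (rule nn_integral_eq_integral[OF int1]) (auto simp: AE_count_space gw_nonneg)
  finally show "emeasure eta0 (space eta0) = 1" using i1 by simp
qed

lemma eta_stationary: "stationary k A P eta0"
  unfolding stationary_def
proof (intro ballI impI)
  fix \<phi> :: "nat \<times> real \<Rightarrow> real" assume \<phi>: "\<phi> \<in> borel_measurable (state_space k)"
  assume "\<exists>B. \<forall>x\<in>space (state_space k). \<bar>\<phi> x\<bar> \<le> B"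
  then obtain B where B: "\<And>x. x \<in> SP \<Longrightarrow> \<bar>\<phi> x\<bar> \<le> B" using space_SS by auto
  have QB: "\<And>x. x \<in> SP \<Longrightarrow> \<bar>Qop k A P \<phi> x\<bar> \<le> B" using Qop_bound[OF B] by auto
  have "(\<integral>x. Qop k A P \<phi> x \<partial>eta0) = Lf (Qop k A P (Qop k A P \<phi>))"
    by (rule eta_int[OF Qop_meas[OF \<phi>] QB])
  also have "\<dots> = Lf (Qop k A P \<phi>)" by (rule Lf_inv[OF QB])
  also have "\<dots> = (\<integral>x. \<phi> x \<partial>eta0)" by (rule eta_int[OF \<phi> B, symmetric])
  finally show "(\<integral>x. Qop k A P \<phi> x \<partial>eta0) = (\<integral>x. \<phi> x \<partial>eta0)" .
qed

lemma eta_stat_prob: "stationary_prob k A P eta0"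
  unfolding stationary_prob_def using sets_eta eta_prob eta_stationary by auto

lemma stat_prob_unique:
  assumes st: "stationary_prob k A P \<mu>"
  shows "\<mu> = eta0"
proof (rule measure_eqI)
  have sets: "sets \<mu> = sets (state_space k)" and ps: "prob_space \<mu>"
    using st by (auto simp: stationary_prob_def)
  show "sets \<mu> = sets eta0" using sets sets_eta by simp
  fix X assume X: "X \<in> sets \<mu>"
  then have XS: "X \<in> sets (state_space k)" using sets by simp
  have im: "indicator X \<in> borel_measurable (state_space k)" using XS by simp
  have ib: "\<And>x. x \<in> SP \<Longrightarrow> \<bar>(indicator X x :: real)\<bar> \<le> 1" by (simp add: indicator_def)
  have m1: "measure \<mu> X = Lf (indicator X)"
  proof -
    have "measure \<mu> X = (\<integral>x. indicator X x \<partial>\<mu>)"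
      using X sets.sets_into_space[OF X] by (simp add: Int_absorb2)
    also have "\<dots> = Lf (indicator X)" by (rule uniq_formula[OF st im ib])
    finally show ?thesis .
  qed
  have m2: "measure eta0 X = Lf (indicator X)"
  proof -
    have Xe: "X \<in> sets eta0" using XS sets_eta by simp
    have "measure eta0 X = (\<integral>x. indicator X x \<partial>eta0)"
      using Xe sets.sets_into_space[OF Xe] by (simp add: Int_absorb2)
    also have "\<dots> = Lf (indicator X)" by (rule uniq_formula[OF eta_stat_prob im ib])
    finally show ?thesis .
  qed
  interpret p1: prob_space \<mu> by (rule ps)
  interpret p2: prob_space eta0 by (rule eta_prob)
  have "X \<in> sets eta0" using XS sets_eta by simp
  then show "emeasure \<mu> X = emeasure eta0 X"
    using m1 m2 X by (simp add: p1.emeasure_eq_measure p2.emeasure_eq_measure)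
qed

lemma main: "(\<exists>!\<mu>. stationary_prob k A P \<mu>) \<and> stationary_prob k A P eta0"
  using eta_stat_prob stat_prob_unique by blast

end

theorem corollary2p1:
  fixes k :: nat and Sing Inv :: "nat set"
    and A :: "nat \<Rightarrow> real^2^2" and P :: "nat \<Rightarrow> nat \<Rightarrow> real" and q :: "nat \<Rightarrow> real"
  assumes part: "Sing \<union> Inv = {1..k}" "Sing \<inter> Inv = {}"
    and nonempty: "Sing \<noteq> {}" "Inv \<noteq> {}"
    and sing: "\<forall>i\<in>Sing. rank (A i) = 1"
    and inv: "\<forall>i\<in>Inv. invertible (A i)"
    and stoch: "left_stochastic k P"
    and prim: "primitive k P"
    and q_prob: "\<forall>i\<in>{1..k}. 0 \<le> q i" "(\<Sum>i\<in>{1..k}. q i) = 1"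
    and q_stat: "\<forall>i\<in>{1..k}. (\<Sum>j\<in>{1..k}. P i j * q j) = q i"
  shows "(\<exists>!\<mu>. stationary_prob k A P \<mu>) \<and> stationary_prob k A P (eta k Sing Inv A P q)"
proof -
  interpret MC k Sing Inv A P q
    by (rule MC.intro) (fact part nonempty sing inv stoch prim q_prob q_stat)+
  show ?thesis by (rule main)
qed


end
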